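(* For an integer $n\ge 1$, let $\mathcal{P}_n$ denote the set of real algebraic polynomials of degree at most $n$, and let $$\mathcal{H}_n=\Big\{f:\ \int_0^x f(t)\,dt=e^{-x/2}p(x)\ \text{for all } x\ge 0,\ \text{for some } p\in\mathcal{P}_n \text{ with } p(0)=0\Big\}.$$ Let $c_n$ be the smallest constant such that $$\int_0^\infty\Big(\frac{1}{x}\int_0^x f(t)\,dt\Big)^2dx\le c_n\int_0^\infty f^2(x)\,dx\qquad\text{for all } f\in\mathcal{H}_n.$$ Then $$4\Big(1-\frac{2}{\ln\frac{n+1}{2}+2}\Big)\le c_n\le 4\Big(1-\frac{8}{(\ln\frac{n+1}{2}+4)^2}\Big).$$ *)

theory Defs
  imports "HOL-Analysis.Analysis" "HOL-Computational_Algebra.Polynomial"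
begin

definition H :: "nat \<Rightarrow> (real \<Rightarrow> real) set" where
  "H n = {f. \<exists>p :: real poly. degree p \<le> n \<and> poly p 0 = 0 \<and>
              (\<forall>x\<ge>0. (f has_integral (exp (- x / 2) * poly p x)) {0..x})}"

definition hardy_const :: "nat \<Rightarrow> real" where
  "hardy_const n = Inf {C. \<forall>f\<in>H n.
      integral {0<..} (\<lambda>x. ((1 / x) * integral {0..x} f)\<^sup>2)
        \<le> C * integral {0<..} (\<lambda>x. (f x)\<^sup>2)}"

end

theory Submission
  imports Defs
begin

lemma ln_lower_pade:
  fixes x :: real assumes x: "0 \<le> x"
  shows "2 * x / (2 + x) \<le> ln (1 + x)"
proof -
  let ?g = "\<lambda>t::real. ln (1 + t) - 2 * t / (2 + t)"
  have "?g 0 \<le> ?g x"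
  proof (rule DERIV_nonneg_imp_nondecreasing[OF x])
    fix t :: real assume t: "0 \<le> t" "t \<le> x"
    have d: "DERIV ?g t :> (1 / (1 + t) - (2 * (2 + t) - 2 * t) / (2 + t)\<^sup>2)"
      using t by (auto intro!: derivative_eq_intros simp: power2_eq_square)
    have "1 / (1 + t) - (2 * (2 + t) - 2 * t) / (2 + t)\<^sup>2 = t\<^sup>2 / ((1 + t) * (2 + t)\<^sup>2)"
    proof -
      have p1: "1 + t > 0" "2 + t > 0" using t by auto
      show ?thesis using p1 by (simp add: divide_simps power2_eq_square) (simp add: algebra_simps)
    qed
    also have "\<dots> \<ge> 0" using t by simp
    finally show "\<exists>y. DERIV ?g t :> y \<and> 0 \<le> y" using d by blast
  qed
  then show ?thesis by simp
qed

lemma ln_succ_lower: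
  fixes N :: nat assumes "N \<ge> 1"
  shows "1 / (real N + 1/2) \<le> ln (real N + 1) - ln (real N)"
proof -
  have "ln (real N + 1) - ln (real N) = ln (1 + 1 / real N)"
    using assms ln_div[of "real N + 1" "real N"] by (simp add: field_simps)
  moreover have "2 * (1 / real N) / (2 + 1 / real N) \<le> ln (1 + 1 / real N)"
    by (rule ln_lower_pade) simp
  moreover have "2 * (1 / real N) / (2 + 1 / real N) = 1 / (real N + 1/2)"
    using assms by (simp add: field_simps)
  ultimately show ?thesis by simp
qed

definition Cc :: "nat \<Rightarrow> real" where "Cc k = (4 * real k + 1) / (2 * real k + 1)\<^sup>2"
definition hh :: "nat \<Rightarrow> real" where "hh k = (\<Sum>m\<in>{1..k}. 1 / (4 * real m + 1))"
definition Phi :: "nat \<Rightarrow> real" where "Phi N = 1 + (\<Sum>k\<in>{1..<N}. Cc k * (4/5 + hh k))"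

lemma Cc_le: "N \<ge> 1 \<Longrightarrow> Cc N \<le> ln (real N + 1) - ln (real N)"
proof -
  assume N: "N \<ge> 1"
  have "Cc N \<le> (4 * real N + 2) / (2 * real N + 1)\<^sup>2"
    unfolding Cc_def by (intro divide_right_mono) auto
  also have "\<dots> = 1 / (real N + 1/2)"
  proof -
    have d: "2 * real N + 1 \<noteq> 0" by simp
    have "(4 * real N + 2) / (2 * real N + 1)\<^sup>2 = (2 * (2 * real N + 1)) / ((2 * real N + 1) * (2 * real N + 1))"
      by (simp add: power2_eq_square)
    also have "\<dots> = 2 / (2 * real N + 1)" using d by (rule nonzero_mult_divide_mult_cancel_right)
    also have "\<dots> = 1 / (real N + 1/2)" by (simp add: field_simps)
    finally show ?thesis .
  qed
  also have "\<dots> \<le> ln (real N + 1) - ln (real N)" by (rule ln_succ_lower[OF N])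
  finally show ?thesis .
qed

lemma lin4_aux: "(h1::real) \<le> h0 + (b - a) / 4 \<Longrightarrow> h0 \<le> 1/5 + a / 4 \<Longrightarrow> h1 \<le> 1/5 + b / 4"
  by (simp add: field_simps)

lemma hh_le: "N \<ge> 1 \<Longrightarrow> hh N \<le> 1/5 + ln (real N) / 4"
proof (induction N rule: dec_induct)
  case base
  then show ?case by (simp add: hh_def)
next
  case (step N)
  have e: "hh (Suc N) = hh N + 1 / (4 * real (Suc N) + 1)"
    by (simp add: hh_def)
  have i: "1 / (4 * real (Suc N) + 1) \<le> (ln (real N + 1) - ln (real N)) / 4"
  proof -
    have "1 / (4 * real (Suc N) + 1) \<le> (1 / (real N + 1/2)) / 4"
      by (simp add: field_simps)
    also have "\<dots> \<le> (ln (real N + 1) - ln (real N)) / 4"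
      using ln_succ_lower[OF step(1)] by (simp only: divide_right_mono)
    finally show ?thesis .
  qed
  from e i have "hh (Suc N) \<le> hh N + (ln (real N + 1) - ln (real N)) / 4" by linarith
  moreover have "real (Suc N) = real N + 1" by simp
  ultimately show ?case using step(3) by (simp only:) (rule lin4_aux)
qed

lemma Phi_le: "N \<ge> 1 \<Longrightarrow> Phi N \<le> (ln (real N))\<^sup>2 / 8 + ln (real N) + 1"
proof (induction N rule: dec_induct)
  case base
  then show ?case by (simp add: Phi_def)
next
  case (step N)
  let ?a = "ln (real N)" and ?b = "ln (real N + 1)"
  have N: "N \<ge> 1" by fact
  have a0: "?a \<ge> 0" using N by simp
  have ab: "?a \<le> ?b" using N by simp
  have "Phi (Suc N) = Phi N + Cc N * (4/5 + hh N)"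
    using N by (simp add: Phi_def)
  also have "Cc N * (4/5 + hh N) \<le> (?b - ?a) * (1 + ?a / 4)"
  proof (rule mult_mono)
    show "Cc N \<le> ?b - ?a" by (rule Cc_le[OF N])
    show "4/5 + hh N \<le> 1 + ?a / 4" using hh_le[OF N] by simp
    show "0 \<le> ?b - ?a" using ab by simp
    have "hh N \<ge> 0" unfolding hh_def by (intro sum_nonneg) simp
    then show "0 \<le> 4/5 + hh N" by simp
  qed
  also have "(?b - ?a) * (1 + ?a / 4) \<le> (?b\<^sup>2 / 8 + ?b + 1) - (?a\<^sup>2 / 8 + ?a + 1)"
  proof -
    have "(?b\<^sup>2 / 8 + ?b + 1) - (?a\<^sup>2 / 8 + ?a + 1) = (?b - ?a) * ((?b + ?a) / 8 + 1)"
      by (simp add: field_simps power2_eq_square)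
    moreover have "(?b - ?a) * (1 + ?a / 4) \<le> (?b - ?a) * ((?b + ?a) / 8 + 1)"
      using ab by (intro mult_left_mono) auto
    ultimately show ?thesis by simp
  qed
  finally have "Phi (Suc N) \<le> Phi N + ((?b\<^sup>2 / 8 + ?b + 1) - (?a\<^sup>2 / 8 + ?a + 1))"
    by simp
  moreover have "real (Suc N) = real N + 1" by simp
  ultimately show ?case using step(3) by (simp only:)
qed

fun pp :: "real \<Rightarrow> nat \<Rightarrow> real" where
  "pp r 0 = 1"
| "pp r (Suc m) = pp r m * (2 * real m + r + 1) / (2 * real m + r + 2)"

lemma pp_pos: "0 \<le> r \<Longrightarrow> pp r m > 0"
  by (induction m) (auto intro!: mult_pos_pos divide_pos_pos)

lemma pp_Suc_mult: "0 \<le> r \<Longrightarrow> (2 * real m + r + 2) * pp r (Suc m) = (2 * real m + r + 1) * pp r m"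
proof -
  assume r: "0 \<le> r"
  have "2 * real m + r + 2 \<noteq> 0" using r by linarith
  then show ?thesis by (simp add: field_simps)
qed

lemma ppQ_step:
  assumes r: "0 \<le> r"
  shows "(pp r m)\<^sup>2 * (4 * real m + 2 * r + 1) \<le> (pp r (Suc m))\<^sup>2 * (4 * real (Suc m) + 2 * r + 1)"
proof -
  define x where "x = 2 * real m + r + 1"
  have x1: "x \<ge> 1" using r by (simp add: x_def)
  have ps: "pp r (Suc m) = pp r m * x / (x + 1)" by (simp add: x_def add.commute add.left_commute)
  have e1: "4 * real m + 2 * r + 1 = 2 * x - 1" by (simp add: x_def)
  have e2: "4 * real (Suc m) + 2 * r + 1 = 2 * x + 3" by (simp add: x_def)
  have key: "(2 * x - 1) * (x + 1)\<^sup>2 \<le> x\<^sup>2 * (2 * x + 3)"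
  proof -
    have "x\<^sup>2 * (2 * x + 3) - (2 * x - 1) * (x + 1)\<^sup>2 = 1"
      by (simp add: power2_eq_square algebra_simps)
    then show ?thesis by simp
  qed
  have "(pp r m)\<^sup>2 * (2 * x - 1) = (pp r m)\<^sup>2 * ((2 * x - 1) * (x + 1)\<^sup>2) / (x + 1)\<^sup>2"
    using x1 by (simp add: field_simps)
  also have "\<dots> \<le> (pp r m)\<^sup>2 * (x\<^sup>2 * (2 * x + 3)) / (x + 1)\<^sup>2"
    using key by (intro divide_right_mono mult_left_mono) auto
  also have "\<dots> = (pp r m * x / (x + 1))\<^sup>2 * (2 * x + 3)"
    using x1 by (simp add: field_simps power2_eq_square)
  finally have calc: "(pp r m)\<^sup>2 * (2 * x - 1) \<le> (pp r m * x / (x + 1))\<^sup>2 * (2 * x + 3)" .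
  show ?thesis unfolding e1 e2 ps using calc .
qed

lemma ppQ_mono:
  assumes r: "0 \<le> r" and mk: "m \<le> k"
  shows "(pp r m)\<^sup>2 * (4 * real m + 2 * r + 1) \<le> (pp r k)\<^sup>2 * (4 * real k + 2 * r + 1)"
  using mk
proof (induction k rule: dec_induct)
  case base then show ?case by simp
next
  case (step k)
  then show ?case using ppQ_step[OF r, of k] by linarith
qed

lemma frac_decr:
  fixes x y :: real
  assumes "1 \<le> y" "y \<le> x"
  shows "(2 * x - 1) / x\<^sup>2 \<le> (2 * y - 1) / y\<^sup>2"
proof -
  have "(2 * x - 1) * y\<^sup>2 \<le> (2 * y - 1) * x\<^sup>2"
  proof -
    have "(2 * y - 1) * x\<^sup>2 - (2 * x - 1) * y\<^sup>2 = (x - y) * (x * (y - 1) + y * (x - 1))"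
      by (simp add: power2_eq_square algebra_simps)
    moreover have "(x - y) * (x * (y - 1) + y * (x - 1)) \<ge> 0"
      using assms by (intro mult_nonneg_nonneg add_nonneg_nonneg) auto
    ultimately show ?thesis by linarith
  qed
  then show ?thesis using assms by (simp add: field_simps)
qed

lemma helper1: "(P::real) \<noteq> 0 \<Longrightarrow> X \<noteq> 0 \<Longrightarrow> D \<noteq> 0 \<Longrightarrow> (P * A / D) / (X * P) = (A / X) / D"
  by (simp add: field_simps)

lemma helper2: "(P::real) \<noteq> 0 \<Longrightarrow> X \<noteq> 0 \<Longrightarrow> E \<noteq> 0 \<Longrightarrow> c * (P * A / E) / (X * P) = (c / E) * (A / X)"
  by (simp add: field_simps)

definition ww :: "real \<Rightarrow> nat \<Rightarrow> nat \<Rightarrow> real" where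
  "ww r m k = (pp r m)\<^sup>2 / ((2 * real k + r + 1)\<^sup>2 * (pp r k)\<^sup>2)"

lemma ww_nonneg: "0 \<le> r \<Longrightarrow> 0 \<le> ww r m k"
  unfolding ww_def by simp

lemma ww_le_gen:
  assumes r: "0 \<le> r" and mk: "m \<le> k"
  shows "ww r m k \<le> Cc k / (4 * real m + 1)"
proof -
  define x where "x = 2 * real k + r + 1"
  have x1: "x \<ge> 2 * real k + 1" using r by (simp add: x_def)
  have pk: "pp r k > 0" using pp_pos[OF r] .
  have ex: "4 * real k + 2 * r + 1 = 2 * x - 1" by (simp add: x_def)
  have Q: "(pp r m)\<^sup>2 * (4 * real m + 2 * r + 1) \<le> (pp r k)\<^sup>2 * (2 * x - 1)"
    using ppQ_mono[OF r mk] unfolding ex .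
  have d: "4 * real m + 2 * r + 1 > 0" using r by linarith
  have "(pp r m)\<^sup>2 \<le> (pp r k)\<^sup>2 * (2 * x - 1) / (4 * real m + 2 * r + 1)"
    using Q d by (simp add: field_simps)
  then have "ww r m k \<le> (pp r k)\<^sup>2 * (2 * x - 1) / (4 * real m + 2 * r + 1) / (x\<^sup>2 * (pp r k)\<^sup>2)"
    unfolding ww_def x_def[symmetric] using x1 by (intro divide_right_mono) auto
  also have "\<dots> = ((2 * x - 1) / x\<^sup>2) / (4 * real m + 2 * r + 1)"
  proof -
    have x0: "x \<noteq> 0" using x1 by linarith
    have d0: "4 * real m + 2 * r + 1 \<noteq> 0" using d by linarith
    show ?thesis by (rule helper1) (use pk x0 d0 in auto)
  qed
  also have "\<dots> \<le> ((2 * x - 1) / x\<^sup>2) / (4 * real m + 1)"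
  proof (rule divide_left_mono)
    show "0 \<le> (2 * x - 1) / x\<^sup>2" using x1 by simp
    show "4 * real m + 1 \<le> 4 * real m + 2 * r + 1" using r by simp
    show "0 < (4 * real m + 2 * r + 1) * (4 * real m + 1)" using d by simp
  qed
  also have "\<dots> \<le> Cc k / (4 * real m + 1)"
  proof (rule divide_right_mono)
    have "(2 * x - 1) / x\<^sup>2 \<le> (2 * (2 * real k + 1) - 1) / (2 * real k + 1)\<^sup>2"
      by (rule frac_decr) (use x1 in auto)
    then show "(2 * x - 1) / x\<^sup>2 \<le> Cc k" by (simp add: Cc_def add.commute)
  qed simp
  finally show ?thesis .
qed

lemma ww_le_zero:
  assumes r: "0 \<le> r" and k: "1 \<le> k"
  shows "ww r 0 k \<le> 4/5 * Cc k"
proof -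
  define x where "x = 2 * real k + r + 1"
  have x1: "x \<ge> 2 * real k + 1" using r by (simp add: x_def)
  have pk: "pp r k > 0" using pp_pos[OF r] .
  have p1: "pp r 1 = (r + 1) / (r + 2)" by simp
  have ex: "4 * real k + 2 * r + 1 = 2 * x - 1" by (simp add: x_def)
  have e5: "4 * real (1::nat) + 2 * r + 1 = 2 * r + 5" by simp
  have Q: "(pp r 1)\<^sup>2 * (2 * r + 5) \<le> (pp r k)\<^sup>2 * (2 * x - 1)"
    using ppQ_mono[OF r k] unfolding ex e5 .
  have c: "((r + 2) / (r + 1))\<^sup>2 / (2 * r + 5) \<le> 4 / 5"
  proof -
    have "5 * (r + 2)\<^sup>2 \<le> 4 * ((r + 1)\<^sup>2 * (2 * r + 5))"
    proof -
      have "4 * ((r + 1)\<^sup>2 * (2 * r + 5)) - 5 * (r + 2)\<^sup>2 = r * (8 * r\<^sup>2 + 31 * r + 28)"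
        by (simp add: power2_eq_square algebra_simps)
      moreover have "r * (8 * r\<^sup>2 + 31 * r + 28) \<ge> 0" using r by simp
      ultimately show ?thesis by linarith
    qed
    have pos: "(r + 1)\<^sup>2 * (2 * r + 5) > 0" using r by (intro mult_pos_pos) auto
    have "((r + 2) / (r + 1))\<^sup>2 / (2 * r + 5) = (r + 2)\<^sup>2 / ((r + 1)\<^sup>2 * (2 * r + 5))"
      by (simp add: power_divide)
    also have "\<dots> \<le> 4 / 5" using pos \<open>5 * (r + 2)\<^sup>2 \<le> 4 * ((r + 1)\<^sup>2 * (2 * r + 5))\<close>
      by (simp add: divide_le_eq)
    finally show ?thesis .
  qed
  have "ww r 0 k = 1 / (x\<^sup>2 * (pp r k)\<^sup>2)" by (simp add: ww_def x_def)
  also have "\<dots> = ((r + 2) / (r + 1))\<^sup>2 * (pp r 1)\<^sup>2 / (x\<^sup>2 * (pp r k)\<^sup>2)"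
  proof -
    have d0: "r + 1 \<noteq> 0" "r + 2 \<noteq> 0" using r by linarith+
    have "((r + 2) / (r + 1)) * pp r 1 = 1" using d0 by (simp add: p1)
    then have one: "((r + 2) / (r + 1))\<^sup>2 * (pp r 1)\<^sup>2 = 1"
      by (metis power_mult_distrib power_one)
    show ?thesis by (simp only: one)
  qed
  also have "\<dots> \<le> ((r + 2) / (r + 1))\<^sup>2 * ((pp r k)\<^sup>2 * (2 * x - 1) / (2 * r + 5)) / (x\<^sup>2 * (pp r k)\<^sup>2)"
  proof (intro divide_right_mono mult_left_mono)
    show "(pp r 1)\<^sup>2 \<le> (pp r k)\<^sup>2 * (2 * x - 1) / (2 * r + 5)"
      using Q r by (simp add: field_simps)
  qed auto
  also have "\<dots> = (((r + 2) / (r + 1))\<^sup>2 / (2 * r + 5)) * ((2 * x - 1) / x\<^sup>2)"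
  proof -
    have x0: "x \<noteq> 0" using x1 by linarith
    have d0: "2 * r + 5 \<noteq> 0" "r + 1 \<noteq> 0" "r + 2 \<noteq> 0" using r by linarith+
    show ?thesis by (rule helper2) (use pk x0 d0 in auto)
  qed
  also have "\<dots> \<le> 4 / 5 * Cc k"
  proof (rule mult_mono)
    have "(2 * x - 1) / x\<^sup>2 \<le> (2 * (2 * real k + 1) - 1) / (2 * real k + 1)\<^sup>2"
      by (rule frac_decr) (use x1 in auto)
    then show "(2 * x - 1) / x\<^sup>2 \<le> Cc k" by (simp add: Cc_def add.commute)
    show "0 \<le> (2 * x - 1) / x\<^sup>2" using x1 by simp
  qed (use c in auto)
  finally show ?thesis .
qed

lemma ww_zero_zero: "0 \<le> r \<Longrightarrow> ww r 0 0 \<le> 1"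
proof -
  assume r: "0 \<le> r"
  have a: "(r + 1)\<^sup>2 \<ge> 1" using r by (intro one_le_power) simp
  have "ww r 0 0 = 1 / (r + 1)\<^sup>2" by (simp add: ww_def add.commute)
  also have "\<dots> \<le> 1" using a by (simp add: divide_le_eq)
  finally show ?thesis .
qed

lemma swap_tri:
  fixes f :: "nat \<Rightarrow> nat \<Rightarrow> real"
  shows "(\<Sum>m<N. \<Sum>k\<in>{m..<N}. f m k) = (\<Sum>k<N. \<Sum>m\<in>{..k}. f m k)"
proof (induction N)
  case 0 then show ?case by simp
next
  case (Suc N)
  have "(\<Sum>m<Suc N. \<Sum>k\<in>{m..<Suc N}. f m k) = (\<Sum>m<Suc N. (\<Sum>k\<in>{m..<N}. f m k) + f m N)"
    by (intro sum.cong) auto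
  also have "\<dots> = (\<Sum>m<Suc N. \<Sum>k\<in>{m..<N}. f m k) + (\<Sum>m<Suc N. f m N)"
    by (simp add: sum.distrib)
  also have "(\<Sum>m<Suc N. \<Sum>k\<in>{m..<N}. f m k) = (\<Sum>m<N. \<Sum>k\<in>{m..<N}. f m k)"
    by simp
  also have "(\<Sum>m<Suc N. f m N) = (\<Sum>m\<in>{..N}. f m N)"
    by (simp add: lessThan_Suc_atMost)
  also have "(\<Sum>m<N. \<Sum>k\<in>{m..<N}. f m k) = (\<Sum>k<N. \<Sum>m\<in>{..k}. f m k)"
    by (rule Suc.IH)
  also have "(\<Sum>k<N. \<Sum>m\<in>{..k}. f m k) + (\<Sum>m\<in>{..N}. f m N) = (\<Sum>k<Suc N. \<Sum>m\<in>{..k}. f m k)"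
    by (rule sum.lessThan_Suc[symmetric])
  finally show ?case .
qed

lemma chain_repr:
  assumes r: "0 \<le> r" and z: "\<And>m. N \<le> m \<Longrightarrow> b m = 0"
    and s: "\<And>k. s k = (2 * real k + r + 2) * b (Suc k) - (2 * real k + r + 1) * b k"
    and mN: "m \<le> N"
  shows "b m = - (\<Sum>k\<in>{m..<N}. pp r m / ((2 * real k + r + 1) * pp r k) * s k)"
  using mN
proof (induction m rule: inc_induct)
  case base
  then show ?case using z by simp
next
  case (step m)
  let ?S = "\<Sum>k\<in>{Suc m..<N}. pp r (Suc m) / ((2 * real k + r + 1) * pp r k) * s k"
  let ?T = "\<Sum>k\<in>{Suc m..<N}. pp r m / ((2 * real k + r + 1) * pp r k) * s k"
  have pm: "pp r m > 0" "pp r (Suc m) > 0" by (rule pp_pos[OF r])+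
  have dm: "2 * real m + r + 1 > 0" using r by linarith
  have IH: "b (Suc m) = - ?S" by (rule step.IH)
  have S_T: "(2 * real m + r + 2) * ?S = (2 * real m + r + 1) * ?T"
  proof -
    have "(2 * real m + r + 2) * ?S = (\<Sum>k\<in>{Suc m..<N}. ((2 * real m + r + 2) * pp r (Suc m)) / ((2 * real k + r + 1) * pp r k) * s k)"
      by (simp add: sum_distrib_left mult.assoc)
    also have "\<dots> = (\<Sum>k\<in>{Suc m..<N}. ((2 * real m + r + 1) * pp r m) / ((2 * real k + r + 1) * pp r k) * s k)"
      by (simp only: pp_Suc_mult[OF r])
    also have "\<dots> = (2 * real m + r + 1) * ?T"
      by (simp add: sum_distrib_left mult.assoc)
    finally show ?thesis .
  qed
  have "(2 * real m + r + 1) * b m = (2 * real m + r + 2) * b (Suc m) - s m"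
    using s[of m] by simp
  also have "\<dots> = - ((2 * real m + r + 1) * ?T) - s m" using IH S_T by simp
  finally have eq: "(2 * real m + r + 1) * b m = - ((2 * real m + r + 1) * ?T) - s m" .
  have "b m = - ?T - s m / (2 * real m + r + 1)"
    using eq dm by (simp add: field_simps)
  also have "\<dots> = - (pp r m / ((2 * real m + r + 1) * pp r m) * s m + ?T)"
    using pm dm by (simp add: field_simps)
  also have "pp r m / ((2 * real m + r + 1) * pp r m) * s m + ?T
      = (\<Sum>k\<in>{m..<N}. pp r m / ((2 * real k + r + 1) * pp r k) * s k)"
    using step.hyps by (simp add: sum.atLeast_Suc_lessThan)
  finally show ?case .
qed

definition col :: "nat \<Rightarrow> real" where
  "col k = (if k = 0 then 1 else Cc k * (4/5 + hh k))"

lemma col_bound: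
  assumes r: "0 \<le> r"
  shows "(\<Sum>m\<in>{..k}. ww r m k) \<le> col k"
proof (cases "k = 0")
  case True
  then show ?thesis using ww_zero_zero[OF r] by (simp add: col_def)
next
  case False
  then have k1: "1 \<le> k" by simp
  have split: "{..k} = insert 0 {1..k}" by auto
  have "(\<Sum>m\<in>{..k}. ww r m k) = ww r 0 k + (\<Sum>m\<in>{1..k}. ww r m k)"
    unfolding split by (subst sum.insert) auto
  also have "\<dots> \<le> 4/5 * Cc k + (\<Sum>m\<in>{1..k}. Cc k / (4 * real m + 1))"
    by (intro add_mono ww_le_zero[OF r k1] sum_mono ww_le_gen[OF r]) auto
  also have "\<dots> = col k"
    using False by (simp add: col_def hh_def sum_distrib_left algebra_simps)
  finally show ?thesis .
qed

lemma sum_col: "N \<ge> 1 \<Longrightarrow> (\<Sum>k<N. col k) = Phi N"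
proof -
  assume N: "N \<ge> 1"
  have split: "{..<N} = insert 0 {1..<N}" using N by auto
  have "(\<Sum>k<N. col k) = col 0 + (\<Sum>k\<in>{1..<N}. col k)"
    unfolding split by (subst sum.insert) auto
  also have "(\<Sum>k\<in>{1..<N}. col k) = (\<Sum>k\<in>{1..<N}. Cc k * (4/5 + hh k))"
    by (intro sum.cong) (auto simp: col_def)
  finally show ?thesis by (simp add: Phi_def col_def)
qed

lemma chain_ineq:
  assumes r: "0 \<le> r" and z: "\<And>m. N \<le> m \<Longrightarrow> b m = 0"
    and s: "\<And>k. s k = (2 * real k + r + 2) * b (Suc k) - (2 * real k + r + 1) * b k"
    and N: "N \<ge> 1"
  shows "(\<Sum>m<N. (b m)\<^sup>2) \<le> Phi N * (\<Sum>m<N. (s m)\<^sup>2)"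
proof -
  let ?SS = "\<Sum>m<N. (s m)\<^sup>2"
  have SS0: "?SS \<ge> 0" by (intro sum_nonneg) auto
  have bnd: "(b m)\<^sup>2 \<le> (\<Sum>k\<in>{m..<N}. ww r m k) * ?SS" if mN: "m < N" for m
  proof -
    have "(b m)\<^sup>2 = (\<Sum>k\<in>{m..<N}. pp r m / ((2 * real k + r + 1) * pp r k) * s k)\<^sup>2"
      using chain_repr[OF r z s less_imp_le[OF mN]] by (simp only: power2_minus)
    also have "\<dots> \<le> (\<Sum>k\<in>{m..<N}. (pp r m / ((2 * real k + r + 1) * pp r k))\<^sup>2) * (\<Sum>k\<in>{m..<N}. (s k)\<^sup>2)"
      by (rule Cauchy_Schwarz_ineq_sum)
    also have "(\<Sum>k\<in>{m..<N}. (pp r m / ((2 * real k + r + 1) * pp r k))\<^sup>2) = (\<Sum>k\<in>{m..<N}. ww r m k)"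
      by (intro sum.cong) (auto simp: ww_def power_divide power_mult_distrib)
    also have "(\<Sum>k\<in>{m..<N}. ww r m k) * (\<Sum>k\<in>{m..<N}. (s k)\<^sup>2) \<le> (\<Sum>k\<in>{m..<N}. ww r m k) * ?SS"
    proof (rule mult_left_mono)
      show "(\<Sum>k\<in>{m..<N}. (s k)\<^sup>2) \<le> ?SS"
        by (rule sum_mono2) auto
      show "0 \<le> (\<Sum>k\<in>{m..<N}. ww r m k)" by (intro sum_nonneg ww_nonneg[OF r])
    qed
    finally show ?thesis .
  qed
  have "(\<Sum>m<N. (b m)\<^sup>2) \<le> (\<Sum>m<N. (\<Sum>k\<in>{m..<N}. ww r m k) * ?SS)"
    by (intro sum_mono bnd) auto
  also have "\<dots> = (\<Sum>m<N. \<Sum>k\<in>{m..<N}. ww r m k) * ?SS"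
    by (simp add: sum_distrib_right)
  also have "(\<Sum>m<N. \<Sum>k\<in>{m..<N}. ww r m k) = (\<Sum>k<N. \<Sum>m\<in>{..k}. ww r m k)"
    by (rule swap_tri)
  also have "\<dots> \<le> (\<Sum>k<N. col k)"
    by (intro sum_mono col_bound[OF r])
  also have "\<dots> = Phi N" using sum_col[OF N] .
  finally show ?thesis using SS0 by (simp add: mult_right_mono)
qed

definition Kr :: "(nat \<Rightarrow> real) \<Rightarrow> nat \<Rightarrow> real" where
  "Kr a j = real (Suc j) * a (Suc j) - real j * a (j - 1)"

lemma sum_split_even_odd:
  fixes g :: "nat \<Rightarrow> real"
  shows "(\<Sum>i<2*n. g i) = (\<Sum>m<n. g (2*m)) + (\<Sum>m<n. g (2*m+1))"
  by (induction n) (simp_all add: algebra_simps)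

lemma sum_split_odd_even:
  fixes g :: "nat \<Rightarrow> real"
  shows "(\<Sum>j<2*n+1. g j) = g 0 + (\<Sum>m<n. g (2*m+1)) + (\<Sum>m<n. g (2*m+2))"
  by (induction n) (simp_all add: algebra_simps)

lemma Bfun_mono:
  fixes s t :: real
  assumes "0 \<le> s" "s \<le> t"
  shows "s\<^sup>2 / 8 + s + 1 \<le> t\<^sup>2 / 8 + t + 1"
proof -
  have "s\<^sup>2 \<le> t\<^sup>2" using assms by (intro power_mono) auto
  then have "s\<^sup>2 / 8 \<le> t\<^sup>2 / 8" by (rule divide_right_mono) simp
  then show ?thesis using assms by linarith
qed

lemma Phi_le_B:
  assumes N: "N \<ge> 1" and Nn: "2 * real N \<le> real n + 1"
  shows "Phi N \<le> (ln ((real n + 1) / 2))\<^sup>2 / 8 + ln ((real n + 1) / 2) + 1"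
proof -
  have "Phi N \<le> (ln (real N))\<^sup>2 / 8 + ln (real N) + 1" by (rule Phi_le[OF N])
  also have "\<dots> \<le> (ln ((real n + 1) / 2))\<^sup>2 / 8 + ln ((real n + 1) / 2) + 1"
  proof (rule Bfun_mono)
    show "0 \<le> ln (real N)" using N by simp
    show "ln (real N) \<le> ln ((real n + 1) / 2)" using N Nn by (subst ln_le_cancel_iff) auto
  qed
  finally show ?thesis .
qed

theorem disc_upper:
  fixes a :: "nat \<Rightarrow> real"
  assumes n: "n \<ge> 1" and z: "\<And>i. n \<le> i \<Longrightarrow> a i = 0"
  shows "(\<Sum>i<n. (a i)\<^sup>2) \<le> ((ln ((real n + 1) / 2))\<^sup>2 / 8 + ln ((real n + 1) / 2) + 1) * (\<Sum>j\<le>n. (Kr a j)\<^sup>2)"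
proof -
  define B where "B = (ln ((real n + 1) / 2))\<^sup>2 / 8 + ln ((real n + 1) / 2) + 1"
  have B0: "B \<ge> 0"
  proof -
    have "ln ((real n + 1) / 2) \<ge> 0" using n by simp
    then show ?thesis unfolding B_def by (simp add: add_nonneg_nonneg)
  qed
  define N0 where "N0 = (n + 1) div 2"
  define N1 where "N1 = n div 2"
  have N0: "N0 \<ge> 1" "2 * real N0 \<le> real n + 1" using n by (auto simp: N0_def)
  have N1: "2 * real N1 \<le> real n + 1" using n by (auto simp: N1_def)
  let ?K = "\<lambda>j. (Kr a j)\<^sup>2"
  have even: "(\<Sum>m<n. (a (2*m))\<^sup>2) \<le> B * (\<Sum>m<n. ?K (2*m+1))"
  proof -
    define b where "b m = a (2*m)" for m
    define s where "s k = (2 * real k + 0 + 2) * b (Suc k) - (2 * real k + 0 + 1) * b k" for k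
    have zb: "b m = 0" if "N0 \<le> m" for m using that z by (simp add: b_def N0_def)
    have "(\<Sum>m<n. (a (2*m))\<^sup>2) = (\<Sum>m<N0. (a (2*m))\<^sup>2)"
    proof (rule sum.mono_neutral_right)
      show "{..<N0} \<subseteq> {..<n}" using n by (auto simp: N0_def)
      show "\<forall>i\<in>{..<n} - {..<N0}. (a (2*i))\<^sup>2 = 0" using zb by (auto simp: b_def)
    qed auto
    also have "\<dots> = (\<Sum>m<N0. (b m)\<^sup>2)" by (simp add: b_def)
    also have "\<dots> \<le> Phi N0 * (\<Sum>m<N0. (s m)\<^sup>2)"
      by (rule chain_ineq[of 0 N0 b s]) (use zb N0 in \<open>auto simp: s_def\<close>)
    also have "\<dots> \<le> B * (\<Sum>m<n. ?K (2*m+1))"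
    proof (rule mult_mono)
      show "Phi N0 \<le> B" unfolding B_def by (rule Phi_le_B[OF N0])
      have "(\<Sum>m<N0. (s m)\<^sup>2) = (\<Sum>m<N0. ?K (2*m+1))"
        by (intro sum.cong) (auto simp: s_def b_def Kr_def algebra_simps)
      also have "\<dots> \<le> (\<Sum>m<n. ?K (2*m+1))"
        by (rule sum_mono2) (use n in \<open>auto simp: N0_def\<close>)
      finally show "(\<Sum>m<N0. (s m)\<^sup>2) \<le> (\<Sum>m<n. ?K (2*m+1))" .
      show "0 \<le> B" by (rule B0)
      show "0 \<le> (\<Sum>m<N0. (s m)\<^sup>2)" by (intro sum_nonneg) auto
    qed
    finally show ?thesis .
  qed
  have odd: "(\<Sum>m<n. (a (2*m+1))\<^sup>2) \<le> B * (\<Sum>m<n. ?K (2*m+2))"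
  proof (cases "N1 = 0")
    case True
    then have "n = 1" using n by (simp add: N1_def)
    then show ?thesis using z B0 by (simp add: sum_nonneg)
  next
    case False
    then have N1': "N1 \<ge> 1" by simp
    define b where "b m = a (2*m+1)" for m
    define s where "s k = (2 * real k + 1 + 2) * b (Suc k) - (2 * real k + 1 + 1) * b k" for k
    have zb: "b m = 0" if "N1 \<le> m" for m using that z by (simp add: b_def N1_def)
    have "(\<Sum>m<n. (a (2*m+1))\<^sup>2) = (\<Sum>m<N1. (a (2*m+1))\<^sup>2)"
    proof (rule sum.mono_neutral_right)
      show "{..<N1} \<subseteq> {..<n}" using n by (auto simp: N1_def)
      show "\<forall>i\<in>{..<n} - {..<N1}. (a (2*i+1))\<^sup>2 = 0" using zb by (auto simp: b_def)
    qed auto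
    also have "\<dots> = (\<Sum>m<N1. (b m)\<^sup>2)" by (simp add: b_def)
    also have "\<dots> \<le> Phi N1 * (\<Sum>m<N1. (s m)\<^sup>2)"
      by (rule chain_ineq[of 1 N1 b s]) (use zb N1' in \<open>auto simp: s_def\<close>)
    also have "\<dots> \<le> B * (\<Sum>m<n. ?K (2*m+2))"
    proof (rule mult_mono)
      show "Phi N1 \<le> B" unfolding B_def by (rule Phi_le_B[OF N1' N1])
      have "(\<Sum>m<N1. (s m)\<^sup>2) = (\<Sum>m<N1. ?K (2*m+2))"
        by (intro sum.cong) (auto simp: s_def b_def Kr_def algebra_simps)
      also have "\<dots> \<le> (\<Sum>m<n. ?K (2*m+2))"
        by (rule sum_mono2) (use n in \<open>auto simp: N1_def\<close>)
      finally show "(\<Sum>m<N1. (s m)\<^sup>2) \<le> (\<Sum>m<n. ?K (2*m+2))" .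
      show "0 \<le> B" by (rule B0)
      show "0 \<le> (\<Sum>m<N1. (s m)\<^sup>2)" by (intro sum_nonneg) auto
    qed
    finally show ?thesis .
  qed
  have lhs: "(\<Sum>i<n. (a i)\<^sup>2) = (\<Sum>m<n. (a (2*m))\<^sup>2) + (\<Sum>m<n. (a (2*m+1))\<^sup>2)"
  proof -
    have "(\<Sum>i<n. (a i)\<^sup>2) = (\<Sum>i<2*n. (a i)\<^sup>2)"
      by (rule sum.mono_neutral_left) (use z in auto)
    then show ?thesis by (simp add: sum_split_even_odd)
  qed
  have rhs: "(\<Sum>j\<le>n. ?K j) \<ge> (\<Sum>m<n. ?K (2*m+1)) + (\<Sum>m<n. ?K (2*m+2))"
  proof -
    have "(\<Sum>j\<le>n. ?K j) = (\<Sum>j<2*n+1. ?K j)"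
    proof (rule sum.mono_neutral_left)
      show "\<forall>i\<in>{..<2 * n + 1} - {..n}. (Kr a i)\<^sup>2 = 0"
      proof
        fix i assume "i \<in> {..<2 * n + 1} - {..n}"
        then have "n \<le> i - 1" "n \<le> Suc i" by auto
        then show "(Kr a i)\<^sup>2 = 0" using z by (simp add: Kr_def)
      qed
    qed auto
    also have "\<dots> = ?K 0 + (\<Sum>m<n. ?K (2*m+1)) + (\<Sum>m<n. ?K (2*m+2))"
      by (rule sum_split_odd_even)
    finally show ?thesis by simp
  qed
  have "(\<Sum>i<n. (a i)\<^sup>2) \<le> B * (\<Sum>m<n. ?K (2*m+1)) + B * (\<Sum>m<n. ?K (2*m+2))"
    using lhs even odd by linarith
  also have "\<dots> \<le> B * (\<Sum>j\<le>n. ?K j)"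
    using rhs B0 by (simp add: distrib_left[symmetric] mult_left_mono)
  finally show ?thesis unfolding B_def .
qed

lemma pp0_step2: "(pp 0 (Suc m))\<^sup>2 * (2 * real (Suc m) + 1) \<le> (pp 0 m)\<^sup>2 * (2 * real m + 1)"
proof -
  define y where "y = 2 * real m + 1"
  have y1: "y \<ge> 1" by (simp add: y_def)
  have ps: "pp 0 (Suc m) = pp 0 m * y / (y + 1)" by (simp add: y_def add.commute add.left_commute)
  have e: "2 * real (Suc m) + 1 = y + 2" by (simp add: y_def)
  have key: "y\<^sup>2 * (y + 2) \<le> y * (y + 1)\<^sup>2"
  proof -
    have "y * (y + 1)\<^sup>2 - y\<^sup>2 * (y + 2) = y" by (simp add: power2_eq_square algebra_simps)
    then show ?thesis using y1 by linarith
  qed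
  have "(pp 0 m * y / (y + 1))\<^sup>2 * (y + 2) = (pp 0 m)\<^sup>2 * (y\<^sup>2 * (y + 2)) / (y + 1)\<^sup>2"
    by (simp add: power_divide power_mult_distrib)
  also have "\<dots> \<le> (pp 0 m)\<^sup>2 * (y * (y + 1)\<^sup>2) / (y + 1)\<^sup>2"
    using key by (intro divide_right_mono mult_left_mono) auto
  also have "\<dots> = (pp 0 m)\<^sup>2 * y"
    using y1 by (simp add: field_simps)
  finally show ?thesis unfolding ps e y_def .
qed

lemma pp0_mono2:
  assumes "m \<le> k"
  shows "(pp 0 k)\<^sup>2 * (2 * real k + 1) \<le> (pp 0 m)\<^sup>2 * (2 * real m + 1)"
  using assms
proof (induction k rule: dec_induct)
  case base then show ?case by simp
next
  case (step k)
  then show ?case using pp0_step2[of k] by linarith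
qed

lemma H2_lower:
  assumes "M \<ge> 1"
  shows "(\<Sum>m<M. 1 / (2 * real m + 1)) \<ge> 1 + ln ((2 * real M + 1) / 3) / 2"
  using assms
proof (induction M rule: dec_induct)
  case base then show ?case by simp
next
  case (step M)
  have "ln ((2 * real (Suc M) + 1) / 3) = ln ((2 * real M + 1) / 3) + ln (1 + 2 / (2 * real M + 1))"
  proof -
    have "(2 * real (Suc M) + 1) / 3 = ((2 * real M + 1) / 3) * (1 + 2 / (2 * real M + 1))"
      by (simp add: field_simps)
    moreover have "ln (((2 * real M + 1) / 3) * (1 + 2 / (2 * real M + 1))) = ln ((2 * real M + 1) / 3) + ln (1 + 2 / (2 * real M + 1))"
      by (rule ln_mult_pos) (auto intro: add_pos_nonneg)
    ultimately show ?thesis by (simp only:)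
  qed
  moreover have "ln (1 + 2 / (2 * real M + 1)) \<le> 2 / (2 * real M + 1)"
    by (rule ln_add_one_self_le_self) simp
  ultimately have "ln ((2 * real (Suc M) + 1) / 3) / 2 \<le> ln ((2 * real M + 1) / 3) / 2 + 1 / (2 * real M + 1)"
    by (simp add: field_simps)
  then show ?case using step.IH by simp
qed

definition tv :: "nat \<Rightarrow> nat \<Rightarrow> real" where
  "tv M i = (if even i \<and> i div 2 < M then pp 0 (i div 2) * real (M - i div 2) else 0)"

lemma tv_even: "m \<le> M \<Longrightarrow> tv M (2 * m) = pp 0 m * (real M - real m)"
  by (cases "m = M") (auto simp: tv_def of_nat_diff)

lemma tv_odd: "tv M (2 * m + 1) = 0"
  by (simp add: tv_def)

lemma Kr_tv_odd: "Kr (tv M) (2 * m + 1) = (if m < M then - (2 * real m + 1) * pp 0 m else 0)"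
proof -
  have k: "Kr (tv M) (2 * m + 1) = (2 * real m + 2) * tv M (2 * (Suc m)) - (2 * real m + 1) * tv M (2 * m)"
    by (simp add: Kr_def algebra_simps)
  show ?thesis
  proof (cases "m < M")
    case True
    have ps: "(2 * real m + 2) * pp 0 (Suc m) = (2 * real m + 1) * pp 0 m"
      using pp_Suc_mult[of 0 m] by simp
    have "Kr (tv M) (2 * m + 1) = (2 * real m + 2) * pp 0 (Suc m) * (real M - real (Suc m)) - (2 * real m + 1) * (pp 0 m * (real M - real m))"
    proof -
      have t1: "tv M (2 * Suc m) = pp 0 (Suc m) * (real M - real (Suc m))"
        by (rule tv_even) (use True in simp)
      have t0: "tv M (2 * m) = pp 0 m * (real M - real m)"
        by (rule tv_even) (use True in simp)
      show ?thesis unfolding k t1 t0 by (simp only: mult.assoc)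
    qed
    also have "\<dots> = - (2 * real m + 1) * pp 0 m"
      unfolding ps by (simp add: algebra_simps)
    finally show ?thesis using True by simp
  next
    case False
    then show ?thesis unfolding k by (simp add: tv_def)
  qed
qed

lemma Kr_tv_even: "Kr (tv M) (2 * m + 2) = 0"
proof -
  have "Kr (tv M) (2 * m + 2) = (2 * real m + 3) * tv M (2 * (m + 1) + 1) - (2 * real m + 2) * tv M (2 * m + 1)"
    by (simp add: Kr_def algebra_simps)
  also have "\<dots> = 0" by (simp only: tv_odd mult_zero_right diff_self)
  finally show ?thesis .
qed

lemma Kr_tv_zero: "Kr (tv M) 0 = 0"
  by (simp add: Kr_def tv_def)

lemma S1_bound:
  assumes "M \<ge> 1"
  shows "(\<Sum>m<M. (2 * real m + 1)\<^sup>2 / (4 * real m + 1)) \<le> (real M)\<^sup>2 / 2 + 3 * real M / 10 + 1/5"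
  using assms
proof (induction M rule: dec_induct)
  case base then show ?case by simp
next
  case (step M)
  have M1: "real M \<ge> 1" using step.hyps by simp
  have t: "(2 * real M + 1)\<^sup>2 / (4 * real M + 1) \<le> real M + 4/5"
  proof -
    have "(2 * real M + 1)\<^sup>2 \<le> (real M + 4/5) * (4 * real M + 1)"
    proof -
      have "(real M + 4/5) * (4 * real M + 1) - (2 * real M + 1)\<^sup>2 = real M / 5 - 1/5"
        by (simp add: power2_eq_square algebra_simps)
      then show ?thesis using M1 by linarith
    qed
    then show ?thesis by (simp add: divide_le_eq)
  qed
  have "(\<Sum>m<Suc M. (2 * real m + 1)\<^sup>2 / (4 * real m + 1))
      = (\<Sum>m<M. (2 * real m + 1)\<^sup>2 / (4 * real m + 1)) + (2 * real M + 1)\<^sup>2 / (4 * real M + 1)"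
    by simp
  also have "\<dots> \<le> ((real M)\<^sup>2 / 2 + 3 * real M / 10 + 1/5) + (real M + 4/5)"
    using step.IH t by (rule add_mono)
  also have "\<dots> = (real (Suc M))\<^sup>2 / 2 + 3 * real (Suc M) / 10 + 1/5"
    by (simp add: power2_eq_square field_simps)
  finally show ?case .
qed

lemma sum_odd_nat: "(\<Sum>m<M. (2 * real m + 1)) = (real M)\<^sup>2"
  by (induction M) (simp_all add: power2_eq_square algebra_simps)

lemma S2_eq:
  "(\<Sum>m<M. (real M - real m)\<^sup>2 / (2 * real m + 1))
     = (real M + 1/2)\<^sup>2 * (\<Sum>m<M. 1 / (2 * real m + 1)) - 3/4 * (real M)\<^sup>2 - real M / 2"
proof -
  have tm: "(real M - real m)\<^sup>2 / (2 * real m + 1)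
      = (real M + 1/2)\<^sup>2 * (1 / (2 * real m + 1)) - (real M + 1/2) + (2 * real m + 1) / 4" for m
  proof -
    have d: "2 * real m + 1 \<noteq> 0" by simp
    show ?thesis using d by (simp add: field_simps power2_eq_square)
  qed
  have "(\<Sum>m<M. (real M - real m)\<^sup>2 / (2 * real m + 1))
      = (\<Sum>m<M. (real M + 1/2)\<^sup>2 * (1 / (2 * real m + 1)) - (real M + 1/2) + (2 * real m + 1) / 4)"
    by (intro sum.cong) (auto simp: tm)
  also have "\<dots> = (real M + 1/2)\<^sup>2 * (\<Sum>m<M. 1 / (2 * real m + 1)) - real M * (real M + 1/2) + (\<Sum>m<M. (2 * real m + 1) / 4)"
    by (simp add: sum.distrib sum_subtractf sum_distrib_left)
  also have "(\<Sum>m<M. (2 * real m + 1) / 4) = (real M)\<^sup>2 / 4"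
    by (simp only: sum_divide_distrib[symmetric] sum_odd_nat)
  also have "(real M + 1/2)\<^sup>2 * (\<Sum>m<M. 1 / (2 * real m + 1)) - real M * (real M + 1/2) + (real M)\<^sup>2 / 4
      = (real M + 1/2)\<^sup>2 * (\<Sum>m<M. 1 / (2 * real m + 1)) - 3/4 * (real M)\<^sup>2 - real M / 2"
    by (simp add: power2_eq_square field_simps)
  finally show ?thesis .
qed

lemma final_poly:
  fixes X L H :: real
  assumes X: "X \<ge> 1" and L: "L \<ge> 0" and H: "H \<ge> L / 2 + 3/4"
  shows "L * ((4 * X + 1) * (X\<^sup>2 / 2 + 3 * X / 10 + 1/5))
         \<le> 2 * ((2 * X + 1) * ((X + 1/2)\<^sup>2 * H - 3/4 * X\<^sup>2 - X / 2))"
proof -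
  have "2 * ((2 * X + 1) * ((X + 1/2)\<^sup>2 * (L / 2 + 3/4) - 3/4 * X\<^sup>2 - X / 2))
        - L * ((4 * X + 1) * (X\<^sup>2 / 2 + 3 * X / 10 + 1/5))
        = L * (13/10 * X\<^sup>2 + 2/5 * X + 1/20) + 2 * (2 * X + 1) * (X / 4 + 3/16)"
    by (simp add: power2_eq_square field_simps)
  moreover have "L * (13/10 * X\<^sup>2 + 2/5 * X + 1/20) + 2 * (2 * X + 1) * (X / 4 + 3/16) \<ge> 0"
    using X L by (intro add_nonneg_nonneg mult_nonneg_nonneg) auto
  moreover have "(X + 1/2)\<^sup>2 * (L / 2 + 3/4) \<le> (X + 1/2)\<^sup>2 * H"
    using H by (intro mult_left_mono) auto
  moreover have "2 * X + 1 \<ge> 0" using X by simp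
  ultimately show ?thesis
    by (smt (verit) mult_left_mono)
qed

lemma Kr_tv_odd': "Kr (tv M) (Suc (2 * m)) = (if m < M then - (2 * real m + 1) * pp 0 m else 0)"
  using Kr_tv_odd[of M m] by simp

lemma Kr_tv_even': "Kr (tv M) (Suc (Suc (2 * m))) = 0"
  using Kr_tv_even[of M m] by simp

lemma Kr_tv_odd_sq: "(Kr (tv M) (Suc (2 * m)))\<^sup>2 = (if m < M then ((2 * real m + 1) * pp 0 m)\<^sup>2 else 0)"
proof (cases "m < M")
  case True
  have e: "Kr (tv M) (Suc (2 * m)) = - ((2 * real m + 1) * pp 0 m)"
    using Kr_tv_odd'[of M m] True by (simp add: algebra_simps)
  have "(Kr (tv M) (Suc (2 * m)))\<^sup>2 = ((2 * real m + 1) * pp 0 m)\<^sup>2"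
    unfolding e by (rule power2_minus)
  then show ?thesis using True by simp
next
  case False
  then show ?thesis using Kr_tv_odd'[of M m] by simp
qed

theorem disc_lower:
  fixes n :: nat
  assumes n: "n \<ge> 2"
  defines "M \<equiv> (n + 1) div 2"
  shows "(\<forall>i. n \<le> i \<longrightarrow> tv M i = 0) \<and> (\<Sum>i<n. (tv M i)\<^sup>2) > 0
         \<and> ln ((real n + 1) / 2) * (\<Sum>j\<le>n. (Kr (tv M) j)\<^sup>2) \<le> 2 * (\<Sum>i<n. (tv M i)\<^sup>2)"
proof -
  have M1: "M \<ge> 1" and Mn: "M \<le> n" and M2: "real n \<le> 2 * real M"
    using n by (auto simp: M_def)
  have z: "tv M i = 0" if "n \<le> i" for i
  proof -
    have "\<not> (even i \<and> i div 2 < M)" using that unfolding M_def by presburger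
    then show ?thesis by (auto simp: tv_def)
  qed
  let ?g = "(pp 0 M)\<^sup>2"
  have g0: "?g > 0" using pp_pos[of 0 M] by simp
  define Den where "Den = (\<Sum>m<M. (pp 0 m * (real M - real m))\<^sup>2)"
  have Den_eq: "(\<Sum>i<n. (tv M i)\<^sup>2) = Den"
  proof -
    have "(\<Sum>i<n. (tv M i)\<^sup>2) = (\<Sum>i<2*n. (tv M i)\<^sup>2)"
      by (rule sum.mono_neutral_left) (use z in auto)
    also have "\<dots> = (\<Sum>m<n. (tv M (2*m))\<^sup>2) + (\<Sum>m<n. (tv M (2*m+1))\<^sup>2)"
      by (rule sum_split_even_odd)
    also have "(\<Sum>m<n. (tv M (2*m+1))\<^sup>2) = 0" by (simp add: tv_def)
    also have "(\<Sum>m<n. (tv M (2*m))\<^sup>2) = (\<Sum>m<M. (tv M (2*m))\<^sup>2)"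
      by (rule sum.mono_neutral_right) (use Mn in \<open>auto simp: tv_def\<close>)
    also have "\<dots> = Den" unfolding Den_def
      by (intro sum.cong) (auto simp: tv_even)
    finally show ?thesis by simp
  qed
  define Num where "Num = (\<Sum>m<M. ((2 * real m + 1) * pp 0 m)\<^sup>2)"
  have Num_eq: "(\<Sum>j\<le>n. (Kr (tv M) j)\<^sup>2) = Num"
  proof -
    have "(\<Sum>j\<le>n. (Kr (tv M) j)\<^sup>2) = (\<Sum>j<2*n+1. (Kr (tv M) j)\<^sup>2)"
    proof (rule sum.mono_neutral_left)
      show "\<forall>i\<in>{..<2 * n + 1} - {..n}. (Kr (tv M) i)\<^sup>2 = 0"
      proof
        fix i assume "i \<in> {..<2 * n + 1} - {..n}"
        then have "n \<le> i - 1" "n \<le> Suc i" by auto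
        then show "(Kr (tv M) i)\<^sup>2 = 0" using z by (simp add: Kr_def)
      qed
    qed auto
    also have "\<dots> = (Kr (tv M) 0)\<^sup>2 + (\<Sum>m<n. (Kr (tv M) (2*m+1))\<^sup>2) + (\<Sum>m<n. (Kr (tv M) (2*m+2))\<^sup>2)"
      by (rule sum_split_odd_even)
    also have "(\<Sum>m<n. (Kr (tv M) (2*m+2))\<^sup>2) = 0" by (simp add: Kr_tv_even')
    also have "(Kr (tv M) 0)\<^sup>2 = 0" by (simp add: Kr_tv_zero)
    also have "(\<Sum>m<n. (Kr (tv M) (2*m+1))\<^sup>2) = (\<Sum>m<M. (Kr (tv M) (2*m+1))\<^sup>2)"
      by (rule sum.mono_neutral_right) (use Mn in \<open>auto simp: Kr_tv_odd'\<close>)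
    also have "\<dots> = Num" unfolding Num_def
      by (intro sum.cong) (auto simp: Kr_tv_odd_sq)
    finally show ?thesis by simp
  qed
  define S1 where "S1 = (\<Sum>m<M. (2 * real m + 1)\<^sup>2 / (4 * real m + 1))"
  define H2 where "H2 = (\<Sum>m<M. 1 / (2 * real m + 1))"
  define S2 where "S2 = (\<Sum>m<M. (real M - real m)\<^sup>2 / (2 * real m + 1))"
  have Num_le: "Num \<le> ?g * (4 * real M + 1) * S1"
  proof -
    have "Num \<le> (\<Sum>m<M. (2 * real m + 1)\<^sup>2 * (?g * (4 * real M + 1) / (4 * real m + 1)))"
      unfolding Num_def
    proof (intro sum_mono)
      fix m assume "m \<in> {..<M}"
      then have "m \<le> M" by simp
      from ppQ_mono[of 0 m M, OF _ this]
      have "(pp 0 m)\<^sup>2 * (4 * real m + 1) \<le> ?g * (4 * real M + 1)" by simp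
      then have "(pp 0 m)\<^sup>2 \<le> ?g * (4 * real M + 1) / (4 * real m + 1)"
        by (simp add: le_divide_eq)
      then have "(2 * real m + 1)\<^sup>2 * (pp 0 m)\<^sup>2 \<le> (2 * real m + 1)\<^sup>2 * (?g * (4 * real M + 1) / (4 * real m + 1))"
        by (rule mult_left_mono) simp
      then show "((2 * real m + 1) * pp 0 m)\<^sup>2 \<le> (2 * real m + 1)\<^sup>2 * (?g * (4 * real M + 1) / (4 * real m + 1))"
        by (simp only: power_mult_distrib)
    qed
    also have "\<dots> = ?g * (4 * real M + 1) * S1"
      unfolding S1_def by (simp add: sum_distrib_left field_simps)
    finally show ?thesis .
  qed
  have Den_ge: "?g * (2 * real M + 1) * S2 \<le> Den"
  proof -
    have "?g * (2 * real M + 1) * S2 = (\<Sum>m<M. (?g * (2 * real M + 1) / (2 * real m + 1)) * (real M - real m)\<^sup>2)"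
      unfolding S2_def by (simp add: sum_distrib_left field_simps)
    also have "\<dots> \<le> Den"
      unfolding Den_def
    proof (intro sum_mono)
      fix m assume "m \<in> {..<M}"
      then have "m \<le> M" by simp
      from pp0_mono2[OF this]
      have "?g * (2 * real M + 1) \<le> (pp 0 m)\<^sup>2 * (2 * real m + 1)" by simp
      then have "?g * (2 * real M + 1) / (2 * real m + 1) \<le> (pp 0 m)\<^sup>2"
        by (simp add: divide_le_eq)
      then have "?g * (2 * real M + 1) / (2 * real m + 1) * (real M - real m)\<^sup>2 \<le> (pp 0 m)\<^sup>2 * (real M - real m)\<^sup>2"
        by (rule mult_right_mono) simp
      then show "?g * (2 * real M + 1) / (2 * real m + 1) * (real M - real m)\<^sup>2 \<le> (pp 0 m * (real M - real m))\<^sup>2"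
        by (simp only: power_mult_distrib)
    qed
    finally show ?thesis .
  qed
  define L where "L = ln ((real n + 1) / 2)"
  have L0: "L \<ge> 0" using n by (simp add: L_def)
  have H2L: "H2 \<ge> L / 2 + 3/4"
  proof -
    have "H2 \<ge> 1 + ln ((2 * real M + 1) / 3) / 2" unfolding H2_def by (rule H2_lower[OF M1])
    moreover have "ln ((2 * real M + 1) / 3) \<ge> L - 1/2"
    proof -
      have "ln ((real n + 1) / 3) \<le> ln ((2 * real M + 1) / 3)"
        using M2 by (subst ln_le_cancel_iff) auto
      moreover have "ln ((real n + 1) / 3) = ln (((real n + 1) / 2) / (3/2))"
        by (rule arg_cong[where f=ln]) simp
      moreover have "ln (((real n + 1) / 2) / (3/2)) = L - ln (3/2)"
        unfolding L_def by (rule ln_divide_pos) auto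
      moreover have "ln (3/2::real) \<le> 1/2"
        using ln_add_one_self_le_self[of "1/2::real"] by simp
      ultimately show ?thesis by linarith
    qed
    ultimately show ?thesis by (simp add: field_simps)
  qed
  have S1b: "S1 \<le> (real M)\<^sup>2 / 2 + 3 * real M / 10 + 1/5" unfolding S1_def by (rule S1_bound[OF M1])
  have S2e: "S2 = (real M + 1/2)\<^sup>2 * H2 - 3/4 * (real M)\<^sup>2 - real M / 2"
    unfolding S2_def H2_def by (rule S2_eq)
  have fp: "L * ((4 * real M + 1) * ((real M)\<^sup>2 / 2 + 3 * real M / 10 + 1/5))
         \<le> 2 * ((2 * real M + 1) * ((real M + 1/2)\<^sup>2 * H2 - 3/4 * (real M)\<^sup>2 - real M / 2))"
    by (rule final_poly) (use M1 L0 H2L in auto)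
  have "L * Num \<le> L * (?g * (4 * real M + 1) * S1)"
    using Num_le L0 by (rule mult_left_mono)
  also have "\<dots> \<le> L * (?g * (4 * real M + 1) * ((real M)\<^sup>2 / 2 + 3 * real M / 10 + 1/5))"
    using S1b L0 g0 by (intro mult_left_mono) auto
  also have "\<dots> = ?g * (L * ((4 * real M + 1) * ((real M)\<^sup>2 / 2 + 3 * real M / 10 + 1/5)))"
    by simp
  also have "\<dots> \<le> ?g * (2 * ((2 * real M + 1) * S2))"
    using fp g0 unfolding S2e by (intro mult_left_mono) auto
  also have "\<dots> = 2 * (?g * (2 * real M + 1) * S2)" by simp
  also have "\<dots> \<le> 2 * Den" using Den_ge by simp
  finally have main: "L * Num \<le> 2 * Den" .
  have Dpos: "Den > 0"
  proof -
    have "0 < (pp 0 0 * (real M - real 0))\<^sup>2" using M1 by simp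
    also have "\<dots> \<le> Den" unfolding Den_def
      by (rule member_le_sum) (use M1 in auto)
    finally show ?thesis .
  qed
  show ?thesis using z Den_eq Num_eq main Dpos by (simp add: L_def)
qed

definition Lam :: "real poly \<Rightarrow> real" where
  "Lam p = (\<Sum>i\<le>degree p. coeff p i * fact i)"

lemma Lam_eq: "degree p < N \<Longrightarrow> Lam p = (\<Sum>i<N. coeff p i * fact i)"
  unfolding Lam_def
  by (rule sum.mono_neutral_left) (auto simp: coeff_eq_0)

lemma Lam_add: "Lam (p + q) = Lam p + Lam q"
proof -
  define N where "N = Suc (max (degree p) (degree q))"
  have "degree (p + q) < N" unfolding N_def using degree_add_le_max[of p q] by simp
  moreover have "degree p < N" "degree q < N" by (auto simp: N_def)
  ultimately show ?thesis by (simp add: Lam_eq sum.distrib algebra_simps)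
qed

lemma Lam_smult: "Lam (smult c p) = c * Lam p"
proof -
  define N where "N = Suc (degree p)"
  have "degree (smult c p) < N" "degree p < N" by (auto simp: N_def)
  then show ?thesis by (simp add: Lam_eq sum_distrib_left algebra_simps)
qed

lemma Lam_0 [simp]: "Lam 0 = 0"
  by (simp add: Lam_def)

lemma Lam_diff: "Lam (p - q) = Lam p - Lam q"
proof -
  define N where "N = Suc (max (degree p) (degree q))"
  have "degree (p - q) < N" unfolding N_def using degree_diff_le_max[of p q] by simp
  moreover have "degree p < N" "degree q < N" by (auto simp: N_def)
  ultimately show ?thesis by (simp add: Lam_eq sum_subtractf algebra_simps)
qed

lemma Lam_sum: "Lam (\<Sum>x\<in>A. f x) = (\<Sum>x\<in>A. Lam (f x))"
proof (cases "finite A")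
  case True
  then show ?thesis by (induction A rule: finite_induct) (simp_all add: Lam_add)
next
  case False
  then show ?thesis by simp
qed

lemma Lam_monom: "Lam (monom c m) = c * fact m"
proof -
  have "degree (monom c m) < Suc m" by (simp add: degree_monom_le le_imp_less_Suc)
  then have "Lam (monom c m) = (\<Sum>i<Suc m. coeff (monom c m) i * fact i)" by (rule Lam_eq)
  also have "\<dots> = c * fact m"
    by (simp add: coeff_monom sum.delta')
  finally show ?thesis .
qed

definition cL :: "nat \<Rightarrow> nat \<Rightarrow> real" where
  "cL k i = (-1) ^ i * real (k choose i) / fact i"

definition lag :: "nat \<Rightarrow> real poly" where
  "lag k = (\<Sum>i\<le>k. monom (cL k i) i)"

lemma coeff_lag: "coeff (lag k) i = cL k i"
proof -
  have "coeff (lag k) i = (\<Sum>j\<le>k. if j = i then cL k j else 0)"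
    unfolding lag_def coeff_sum by (intro sum.cong) (auto simp: coeff_monom)
  also have "\<dots> = (if i \<le> k then cL k i else 0)"
    by (simp add: sum.delta')
  also have "\<dots> = cL k i"
    by (auto simp: cL_def binomial_eq_0)
  finally show ?thesis .
qed

lemma cL_zero: "k < i \<Longrightarrow> cL k i = 0"
  by (simp add: cL_def binomial_eq_0)

lemma cL_top: "cL k k = (-1) ^ k / fact k"
  by (simp add: cL_def)

lemma degree_lag: "degree (lag k) = k"
proof (rule antisym)
  show "degree (lag k) \<le> k"
    by (rule degree_le) (auto simp: coeff_lag cL_zero)
  show "k \<le> degree (lag k)"
    by (rule le_degree) (simp add: coeff_lag cL_top)
qed

lemma lag_mult: "lag j * lag k = (\<Sum>i\<le>j. \<Sum>l\<le>k. monom (cL j i * cL k l) (i + l))"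
  unfolding lag_def sum_product mult_monom ..

lemma Lam_lag_mult: "Lam (lag j * lag k) = (\<Sum>i\<le>j. cL j i * (\<Sum>l\<le>k. cL k l * fact (i + l)))"
  unfolding lag_mult Lam_sum Lam_monom by (simp add: sum_distrib_left mult.assoc)

lemma inner_term:
  assumes "l \<le> k"
  shows "cL k l * fact (i + l) = fact i * (((- real i - 1) gchoose l) * (real k gchoose (k - l)))"
proof -
  have f: "(fact (i + l) :: real) = fact l * fact i * real ((i + l) choose l)"
  proof -
    have "fact l * fact (i + l - l) * ((i + l) choose l) = fact (i + l)"
      by (rule binomial_fact_lemma) simp
    then have "(fact l * fact i * real ((i + l) choose l) :: real) = fact (i + l)"
      by (metis add_diff_cancel_right' of_nat_fact of_nat_mult)
    then show ?thesis by simp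
  qed
  have g1: "((- real i - 1) gchoose l) = (-1) ^ l * real ((i + l) choose l)"
  proof -
    have "((- real i - 1) gchoose l) = (-1) ^ l * ((of_nat l - (- real i - 1) - 1) gchoose l)"
      by (rule gbinomial_negated_upper)
    also have "of_nat l - (- real i - 1) - 1 = real (i + l)" by simp
    also have "(real (i + l) gchoose l) = real ((i + l) choose l)"
      by (simp add: binomial_gbinomial)
    finally show ?thesis .
  qed
  have g2: "(real k gchoose (k - l)) = real (k choose l)"
    using assms by (simp add: binomial_gbinomial[symmetric] binomial_symmetric[of l k, symmetric])
  show ?thesis
    unfolding g1 g2 cL_def f by (simp add: field_simps)
qed

lemma inner_id: "(\<Sum>l\<le>k. cL k l * fact (i + l)) = fact i * ((real k - real i - 1) gchoose k)"
proof -
  have "(\<Sum>l\<le>k. cL k l * fact (i + l)) = fact i * (\<Sum>l\<le>k. ((- real i - 1) gchoose l) * (real k gchoose (k - l)))"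
    by (simp add: inner_term sum_distrib_left)
  also have "(\<Sum>l\<le>k. ((- real i - 1) gchoose l) * (real k gchoose (k - l))) = ((- real i - 1) + real k) gchoose k"
    unfolding atMost_atLeast0 by (rule gbinomial_Vandermonde)
  also have "(- real i - 1) + real k = real k - real i - 1" by simp
  finally show ?thesis .
qed

lemma G_lt: "i < k \<Longrightarrow> (real k - real i - 1) gchoose k = 0"
proof -
  assume ik: "i < k"
  then have "real k - real i - 1 = real (k - i - 1)" by (simp add: of_nat_diff)
  then have "(real k - real i - 1) gchoose k = real ((k - i - 1) choose k)"
    by (simp add: binomial_gbinomial)
  also have "\<dots> = 0" using ik by simp
  finally show ?thesis .
qed

lemma G_eq: "(real k - real k - 1) gchoose k = (-1) ^ k"
proof -
  have "((-1::real) gchoose k) = (-1) ^ k * ((of_nat k - (-1) - 1) gchoose k)"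
    by (rule gbinomial_negated_upper)
  also have "((of_nat k - (-1) - 1 :: real) gchoose k) = 1"
    by (simp add: binomial_gbinomial[symmetric])
  finally show ?thesis by simp
qed

lemma G_eq': "((-1::real) gchoose k) = (-1) ^ k"
  using G_eq[of k] by simp

lemma lag_ortho_le:
  assumes "j \<le> k"
  shows "Lam (lag j * lag k) = (if j = k then 1 else 0)"
proof -
  have "Lam (lag j * lag k) = (\<Sum>i\<le>j. cL j i * (fact i * ((real k - real i - 1) gchoose k)))"
    unfolding Lam_lag_mult inner_id ..
  also have "\<dots> = (\<Sum>i\<le>j. if i = k then cL j k * (fact k * (-1) ^ k) else 0)"
  proof (intro sum.cong refl)
    fix i assume "i \<in> {..j}"
    then have "i \<le> k" using assms by simp
    then show "cL j i * (fact i * ((real k - real i - 1) gchoose k)) = (if i = k then cL j k * (fact k * (-1) ^ k) else 0)"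
      by (cases "i = k") (auto simp: G_lt G_eq')
  qed
  also have "\<dots> = (if j = k then 1 else 0)"
  proof (cases "j = k")
    case True
    then show ?thesis by (simp add: sum.delta cL_top power_mult_distrib[symmetric])
  next
    case False
    then show ?thesis using assms by (simp add: sum.delta)
  qed
  finally show ?thesis .
qed

lemma lag_ortho: "Lam (lag j * lag k) = (if j = k then 1 else 0)"
proof (cases "j \<le> k")
  case True then show ?thesis by (rule lag_ortho_le)
next
  case False
  then have "Lam (lag k * lag j) = (if k = j then 1 else 0)" by (intro lag_ortho_le) simp
  then show ?thesis by (simp add: mult.commute)
qed

lemma Lam_expansion:
  assumes "finite A"
  shows "Lam ((\<Sum>k\<in>A. smult (d k) (lag k)) * (\<Sum>k\<in>A. smult (e k) (lag k))) = (\<Sum>k\<in>A. d k * e k)"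
proof -
  have "(\<Sum>k\<in>A. smult (d k) (lag k)) * (\<Sum>k\<in>A. smult (e k) (lag k))
      = (\<Sum>j\<in>A. \<Sum>k\<in>A. smult (d j * e k) (lag j * lag k))"
    unfolding sum_product by (simp add: mult_smult_left mult_smult_right mult.commute)
  then have "Lam ((\<Sum>k\<in>A. smult (d k) (lag k)) * (\<Sum>k\<in>A. smult (e k) (lag k)))
      = (\<Sum>j\<in>A. \<Sum>k\<in>A. d j * e k * (if j = k then 1 else 0))"
    by (simp add: Lam_sum Lam_smult lag_ortho)
  also have "\<dots> = (\<Sum>j\<in>A. d j * e j)"
  proof (rule sum.cong[OF refl])
    fix j assume j: "j \<in> A"
    have "(\<Sum>k\<in>A. d j * e k * (if j = k then 1 else 0)) = (\<Sum>k\<in>A. if j = k then d j * e k else 0)"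
      by (rule sum.cong) auto
    also have "\<dots> = d j * e j" using assms j by (simp add: sum.delta')
    finally show "(\<Sum>k\<in>A. d j * e k * (if j = k then 1 else 0)) = d j * e j" .
  qed
  finally show ?thesis .
qed

lemma lag_expansion_exists:
  fixes q :: "real poly"
  shows "(\<forall>i\<ge>n. coeff q i = 0) \<Longrightarrow> \<exists>a. (\<forall>k\<ge>n. a k = 0) \<and> q = (\<Sum>k<n. smult (a k) (lag k))"
proof (induction n arbitrary: q)
  case 0
  then have "q = 0" by (intro poly_eqI) auto
  then show ?case by (intro exI[of _ "\<lambda>_. 0"]) simp
next
  case (Suc n)
  define c where "c = coeff q n / cL n n"
  have cnz: "cL n n \<noteq> 0" by (simp add: cL_top)
  define q' where "q' = q - smult c (lag n)"
  have "\<forall>i\<ge>n. coeff q' i = 0"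
  proof (intro allI impI)
    fix i assume i: "n \<le> i"
    show "coeff q' i = 0"
    proof (cases "i = n")
      case True
      then show ?thesis using cnz by (simp add: q'_def c_def coeff_lag)
    next
      case False
      then have "Suc n \<le> i" "n < i" using i by auto
      then show ?thesis using Suc.prems by (simp add: q'_def coeff_lag cL_zero)
    qed
  qed
  from Suc.IH[OF this] obtain a where a: "\<forall>k\<ge>n. a k = 0" "q' = (\<Sum>k<n. smult (a k) (lag k))" by blast
  define a' where "a' = a(n := c)"
  have "q = q' + smult c (lag n)" by (simp add: q'_def)
  also have "\<dots> = (\<Sum>k<n. smult (a' k) (lag k)) + smult (a' n) (lag n)"
    unfolding a(2) a'_def by (intro arg_cong2[where f="(+)"] sum.cong) auto
  also have "\<dots> = (\<Sum>k<Suc n. smult (a' k) (lag k))" by simp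
  finally show ?case using a(1) by (intro exI[of _ a']) (auto simp: a'_def)
qed

lemma comb_identity:
  fixes j k :: nat
  shows "2 * (real j + 2) * real (k choose Suc j) + (real j + 1) * real (k choose j)
       = real (k choose Suc j) - real k * real ((k - 1) choose Suc j) + (real k + 1) * real (Suc k choose Suc j)"
proof -
  have pas: "Suc k choose Suc j = (k choose j) + (k choose Suc j)" by simp
  have ab1: "(k - Suc j) * (k choose Suc j) = k * ((k - 1) choose Suc j)" by (rule binomial_absorb_comp)
  have ab2: "Suc j * (k choose Suc j) = (k - j) * (k choose j)"
    using binomial_absorption[of j k] binomial_absorb_comp[of k j] by simp
  show ?thesis
  proof (cases "j < k")
    case True
    have e1: "real (k - Suc j) = real k - real j - 1" using True by (simp add: of_nat_diff)
    have e2: "real (k - j) = real k - real j" using True by (simp add: of_nat_diff)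
    have r1: "real k * real ((k - 1) choose Suc j) = (real k - real j - 1) * real (k choose Suc j)"
      using arg_cong[OF ab1, of real] unfolding of_nat_mult e1 by (rule sym)
    have r2: "real (Suc j) * real (k choose Suc j) = (real k - real j) * real (k choose j)"
      using arg_cong[OF ab2, of real] unfolding of_nat_mult e2 .
    show ?thesis unfolding pas of_nat_add r1 using r2 by (simp add: algebra_simps)
  next
    case False
    then have A0: "k choose Suc j = 0" and C0: "(k - 1) choose Suc j = 0" by auto
    show ?thesis
    proof (cases "j = k")
      case True then show ?thesis unfolding pas A0 C0 by simp
    next
      case False
      then have "k choose j = 0" using \<open>\<not> j < k\<close> by simp
      then show ?thesis unfolding pas A0 C0 by simp
    qed
  qed
qed

lemma cL_0 [simp]: "cL k 0 = 1"
  by (simp add: cL_def)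

lemma cL_Suc_form: "cL k (Suc j) = - ((-1) ^ j / fact (Suc j)) * real (k choose Suc j)"
  by (simp add: cL_def)

lemma helper3: "(x::real) \<noteq> 0 \<Longrightarrow> (a / (x * f)) * (x * c) = a * c / f"
  by (cases "f = 0") (simp_all add: field_simps)

lemma cL_form: "cL k j = ((-1) ^ j / fact (Suc j)) * ((real j + 1) * real (k choose j))"
proof -
  have F: "(fact (Suc j)::real) = (real j + 1) * fact j" by (simp add: algebra_simps)
  have nz: "real j + 1 \<noteq> 0" by simp
  show ?thesis unfolding cL_def F by (rule helper3[symmetric, OF nz])
qed

lemma X_mult: "[:0, 1:] * (p :: real poly) = pCons 0 p"
  by simp

lemma coeff_X_mult: "coeff ([:0, 1:] * (p :: real poly)) i = (if i = 0 then 0 else coeff p (i - 1))"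
  unfolding X_mult by (cases i) simp_all

lemma lag_D:
  "lag k + [:0, 1:] * pderiv (lag k) - smult (1/2) ([:0, 1:] * lag k)
     = smult (1/2) (lag k) - smult (real k / 2) (lag (k - 1)) + smult ((real k + 1) / 2) (lag (k + 1))"
proof (rule poly_eqI)
  fix i
  show "coeff (lag k + [:0, 1:] * pderiv (lag k) - smult (1/2) ([:0, 1:] * lag k)) i
      = coeff (smult (1/2) (lag k) - smult (real k / 2) (lag (k - 1)) + smult ((real k + 1) / 2) (lag (k + 1))) i"
  proof (cases i)
    case 0
    then show ?thesis by (simp add: coeff_X_mult coeff_lag field_simps)
  next
    case (Suc j)
    define E where "E = (-1::real) ^ j / fact (Suc j)"
    have f1: "cL k' (Suc j) = - E * real (k' choose Suc j)" for k' unfolding E_def by (rule cL_Suc_form)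
    have f2: "cL k j = E * ((real j + 1) * real (k choose j))" unfolding E_def by (rule cL_form)
    have lhs0: "coeff (lag k + [:0, 1:] * pderiv (lag k) - smult (1/2) ([:0, 1:] * lag k)) (Suc j)
        = cL k (Suc j) + (real j + 1) * cL k (Suc j) - cL k j / 2"
      by (simp add: coeff_X_mult coeff_lag coeff_pderiv algebra_simps)
    have rhs0: "coeff (smult (1/2) (lag k) - smult (real k / 2) (lag (k - 1)) + smult ((real k + 1) / 2) (lag (k + 1))) (Suc j)
        = cL k (Suc j) / 2 - real k / 2 * cL (k - 1) (Suc j) + (real k + 1) / 2 * cL (Suc k) (Suc j)"
      by (simp add: coeff_lag)
    have key: "(real j + 2) * real (k choose Suc j) + (real j + 1) * real (k choose j) / 2
        = real (k choose Suc j) / 2 - real k * real ((k - 1) choose Suc j) / 2 + (real k + 1) * real (Suc k choose Suc j) / 2"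
      using comb_identity[of j k] by (simp add: field_simps)
    have "cL k (Suc j) + (real j + 1) * cL k (Suc j) - cL k j / 2
        = - E * ((real j + 2) * real (k choose Suc j) + (real j + 1) * real (k choose j) / 2)"
      unfolding f1 f2 by (simp add: algebra_simps)
    also have "\<dots> = - E * (real (k choose Suc j) / 2 - real k * real ((k - 1) choose Suc j) / 2 + (real k + 1) * real (Suc k choose Suc j) / 2)"
      unfolding key ..
    also have "\<dots> = cL k (Suc j) / 2 - real k / 2 * cL (k - 1) (Suc j) + (real k + 1) / 2 * cL (Suc k) (Suc j)"
      unfolding f1 by (simp add: field_simps)
    finally show ?thesis unfolding Suc lhs0 rhs0 .
  qed
qed

definition Dop :: "real poly \<Rightarrow> real poly" where
  "Dop p = p + [:0, 1:] * pderiv p - smult (1/2) ([:0, 1:] * p)"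

lemma Dop_add: "Dop (p + q) = Dop p + Dop q"
  by (simp add: Dop_def pderiv_add algebra_simps smult_add_right)

lemma Dop_smult: "Dop (smult c p) = smult c (Dop p)"
  by (simp add: Dop_def pderiv_smult algebra_simps smult_add_right smult_diff_right mult_smult_right)

lemma Dop_0: "Dop 0 = 0"
  by (simp add: Dop_def)

lemma Dop_sum: "Dop (\<Sum>k\<in>A. f k) = (\<Sum>k\<in>A. Dop (f k))"
proof (cases "finite A")
  case True
  then show ?thesis by (induction A rule: finite_induct) (simp_all add: Dop_0 Dop_add)
next
  case False then show ?thesis by (simp add: Dop_0)
qed

lemma Dop_lag: "Dop (lag k) = smult (1/2) (lag k) - smult (real k / 2) (lag (k - 1)) + smult ((real k + 1) / 2) (lag (k + 1))"
  unfolding Dop_def by (rule lag_D)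

lemma r_expansion:
  assumes z: "\<And>k. n \<le> k \<Longrightarrow> a k = 0"
  shows "Dop (\<Sum>k<n. smult (a k) (lag k)) = (\<Sum>j\<le>n. smult ((a j - Kr a j) / 2) (lag j))"
proof -
  have "Dop (\<Sum>k<n. smult (a k) (lag k)) = (\<Sum>k<n. smult (a k) (Dop (lag k)))"
    by (simp add: Dop_sum Dop_smult)
  also have "\<dots> = (\<Sum>k<n. smult (a k / 2) (lag k)) - (\<Sum>k<n. smult (a k * real k / 2) (lag (k - 1)))
                  + (\<Sum>k<n. smult (a k * (real k + 1) / 2) (lag (k + 1)))"
    unfolding Dop_lag by (simp add: sum.distrib sum_subtractf smult_add_right smult_diff_right)
  also have "(\<Sum>k<n. smult (a k / 2) (lag k)) = (\<Sum>j\<le>n. smult (a j / 2) (lag j))"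
    by (rule sum.mono_neutral_left) (use z in auto)
  also have "(\<Sum>k<n. smult (a k * real k / 2) (lag (k - 1))) = (\<Sum>j\<le>n. smult (a (Suc j) * real (Suc j) / 2) (lag j))"
  proof -
    have "(\<Sum>k<n. smult (a k * real k / 2) (lag (k - 1))) = (\<Sum>k\<le>Suc n. smult (a k * real k / 2) (lag (k - 1)))"
      by (rule sum.mono_neutral_left) (use z in auto)
    also have "\<dots> = smult (a 0 * real 0 / 2) (lag (0 - 1)) + (\<Sum>j\<le>n. smult (a (Suc j) * real (Suc j) / 2) (lag (Suc j - 1)))"
      by (rule sum.atMost_Suc_shift)
    finally show ?thesis by simp
  qed
  also have "(\<Sum>k<n. smult (a k * (real k + 1) / 2) (lag (k + 1))) = (\<Sum>j\<le>n. smult (a (j - 1) * real j / 2) (lag j))"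
  proof -
    have "(\<Sum>j\<le>n. smult (a (j - 1) * real j / 2) (lag j)) = smult (a (0 - 1) * real 0 / 2) (lag 0) + (\<Sum>i<n. smult (a (Suc i - 1) * real (Suc i) / 2) (lag (Suc i)))"
      by (rule sum.atMost_shift)
    then show ?thesis by (simp add: add.commute)
  qed
  also have "(\<Sum>j\<le>n. smult (a j / 2) (lag j)) - (\<Sum>j\<le>n. smult (a (Suc j) * real (Suc j) / 2) (lag j)) + (\<Sum>j\<le>n. smult (a (j - 1) * real j / 2) (lag j))
      = (\<Sum>j\<le>n. smult ((a j - Kr a j) / 2) (lag j))"
    unfolding sum_subtractf[symmetric] sum.distrib[symmetric]
    by (intro sum.cong refl) (simp add: Kr_def smult_diff_left[symmetric] smult_add_left[symmetric] field_simps)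
  finally show ?thesis .
qed

lemma cross_zero:
  assumes z: "\<And>k. n \<le> k \<Longrightarrow> a k = 0" and n: "n \<ge> 1"
  shows "(\<Sum>j\<le>n. a j * Kr a j) = 0"
proof -
  obtain m where m: "n = Suc m" using n by (cases n) auto
  have s1: "(\<Sum>j\<le>n. a j * (real (Suc j) * a (Suc j))) = (\<Sum>j\<le>m. real (Suc j) * a j * a (Suc j))"
    using z[of "Suc m"] unfolding m by (simp add: algebra_simps)
  have s2: "(\<Sum>j\<le>n. a j * (real j * a (j - 1))) = (\<Sum>j\<le>m. real (Suc j) * a j * a (Suc j))"
    unfolding m by (subst sum.atMost_Suc_shift) (simp add: algebra_simps)
  show ?thesis unfolding Kr_def right_diff_distrib sum_subtractf s1 s2 by simp
qed

theorem norms: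
  assumes z: "\<And>k. n \<le> k \<Longrightarrow> a k = 0" and n: "n \<ge> 1"
  defines "q \<equiv> (\<Sum>k<n. smult (a k) (lag k))"
  shows "Lam (q * q) = (\<Sum>k<n. (a k)\<^sup>2)"
    and "Lam (Dop q * Dop q) = ((\<Sum>k<n. (a k)\<^sup>2) + (\<Sum>j\<le>n. (Kr a j)\<^sup>2)) / 4"
proof -
  show "Lam (q * q) = (\<Sum>k<n. (a k)\<^sup>2)"
    unfolding q_def by (simp add: Lam_expansion power2_eq_square)
  have e: "Dop q = (\<Sum>j\<le>n. smult ((a j - Kr a j) / 2) (lag j))"
    unfolding q_def using z by (rule r_expansion)
  have "Lam (Dop q * Dop q) = (\<Sum>j\<le>n. ((a j - Kr a j) / 2) * ((a j - Kr a j) / 2))"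
    unfolding e by (rule Lam_expansion) simp
  also have "\<dots> = ((\<Sum>j\<le>n. (a j)\<^sup>2) + (\<Sum>j\<le>n. (Kr a j)\<^sup>2) - 2 * (\<Sum>j\<le>n. a j * Kr a j)) / 4"
    by (simp add: sum_divide_distrib[symmetric] sum.distrib sum_subtractf sum_distrib_left power2_eq_square algebra_simps)
  also have "(\<Sum>j\<le>n. a j * Kr a j) = 0" by (rule cross_zero[OF z n])
  also have "(\<Sum>j\<le>n. (a j)\<^sup>2) = (\<Sum>k<n. (a k)\<^sup>2)"
    by (rule sum.mono_neutral_right) (use z in auto)
  finally show "Lam (Dop q * Dop q) = ((\<Sum>k<n. (a k)\<^sup>2) + (\<Sum>j\<le>n. (Kr a j)\<^sup>2)) / 4" by simp
qed

lemma sub_interval_zero: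
  fixes h :: "real \<Rightarrow> real"
  assumes h: "\<And>x. 0 \<le> x \<Longrightarrow> (h has_integral 0) {0..x}"
    and cd: "0 \<le> c" "c \<le> d"
  shows "(h has_integral 0) {c..d}"
proof -
  have id: "h integrable_on {0..d}" using h[of d] cd by (auto simp: integrable_on_def)
  then have ic: "h integrable_on {c..d}" by (rule integrable_subinterval_real) (use cd in auto)
  have "integral {0..c} h + integral {c..d} h = integral {0..d} h"
    by (rule Henstock_Kurzweil_Integration.integral_combine) (use cd id in auto)
  moreover have "integral {0..c} h = 0" "integral {0..d} h = 0"
    using h[of c] h[of d] cd by (auto intro: integral_unique)
  ultimately have "integral {c..d} h = 0" by simp
  then show ?thesis using ic by (metis integrable_integral)
qed

lemma abs_int_on_N:
  fixes h :: "real \<Rightarrow> real"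
  assumes h: "\<And>x. 0 \<le> x \<Longrightarrow> (h has_integral 0) {0..x}" and N: "0 \<le> N"
  shows "h absolutely_integrable_on {0..N}"
proof -
  have "h absolutely_integrable_on cbox 0 N"
  proof (rule bounded_variation_absolutely_integrable_interval[where B=0])
    show "h integrable_on cbox 0 N" using h[OF N] by (auto simp: integrable_on_def)
    fix d assume d: "d division_of cbox 0 N"
    have "norm (integral K h) = 0" if K: "K \<in> d" for K
    proof -
      obtain c e where Ke: "K = cbox c e" using division_ofD(4)[OF d K] by blast
      have ne: "K \<noteq> {}" using division_ofD(3)[OF d K] .
      have sub: "K \<subseteq> cbox 0 N" using division_ofD(2)[OF d K] .
      have ce: "c \<le> e" using ne Ke by auto
      have c0: "0 \<le> c" using sub Ke ce by auto
      have "(h has_integral 0) {c..e}" by (rule sub_interval_zero[OF h c0 ce])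
      then show ?thesis using Ke by (simp add: integral_unique)
    qed
    then show "(\<Sum>K\<in>d. norm (integral K h)) \<le> 0" by simp
  qed
  then show ?thesis by simp
qed

lemma ae_zero_on_N:
  fixes h :: "real \<Rightarrow> real"
  assumes h: "\<And>x. 0 \<le> x \<Longrightarrow> (h has_integral 0) {0..x}" and N: "0 \<le> N"
  shows "negligible {x \<in> {0..N}. h x \<noteq> 0}"
proof -
  define u where "u x = (if x \<in> {0..N} then h x else 0)" for x
  have uabs: "u absolutely_integrable_on UNIV"
    unfolding u_def absolutely_integrable_restrict_UNIV by (rule abs_int_on_N[OF h N])
  have uint: "integrable lebesgue u"
    using uabs by (simp add: set_integrable_def)
  have umeas: "u \<in> borel_measurable lebesgue" using uint by (rule borel_measurable_integrable)
  obtain u' where u'b: "u' \<in> borel_measurable lborel" and uu': "AE x in lborel. u x = u' x"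
    using completion_ex_borel_measurable_real[OF umeas] by blast
  have uu'L: "AE x in lebesgue. u x = u' x" using uu' by (rule AE_completion)
  have u'bL: "u' \<in> borel_measurable lebesgue" using u'b by (rule measurable_completion)
  have "integrable lebesgue u = integrable lebesgue u'" by (rule integrable_cong_AE[OF umeas u'bL uu'L])
  then have u'intL: "integrable lebesgue u'" using uint by simp
  have u'int: "integrable lborel u'"
    using u'intL integrable_completion[OF u'b[unfolded sets_lborel[symmetric]]] by simp
  have half: "(\<integral>x. indicator {a<..} x * u' x \<partial>lborel) = 0" for a
  proof -
    have "(\<integral>x. indicator {a<..} x * u' x \<partial>lborel) = (\<integral>x. indicator {a<..} x * u' x \<partial>lebesgue)"
      by (rule integral_completion[symmetric]) (use u'b in measurable)
    also have "\<dots> = (\<integral>x. indicator {a<..} x * u x \<partial>lebesgue)"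
    proof (rule integral_cong_AE)
      have ind: "(indicator {a<..} :: real \<Rightarrow> real) \<in> borel_measurable lebesgue"
        by (rule measurable_completion) simp
      show "(\<lambda>x. indicator {a<..} x * u' x) \<in> borel_measurable lebesgue"
        using ind u'bL by (rule borel_measurable_times)
      show "(\<lambda>x. indicator {a<..} x * u x) \<in> borel_measurable lebesgue"
        using ind umeas by (rule borel_measurable_times)
      show "AE x in lebesgue. indicator {a<..} x * u' x = indicator {a<..} x * u x"
        using uu'L by eventually_elim simp
    qed
    also have "\<dots> = (LINT x:{a<..} | lebesgue. u x)"
      by (simp add: set_lebesgue_integral_def)
    also have "\<dots> = integral {a<..} u"
    proof (rule set_lebesgue_integral_eq_integral(2))
      show "set_integrable lebesgue {a<..} u"
        unfolding set_integrable_def by (rule integrable_mult_indicator) (use uint in auto)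
    qed
    also have "integral {a<..} u = 0"
    proof -
      have "(h has_integral 0) ({0..N} \<inter> {a<..})"
      proof (cases "a < 0")
        case True
        then have "{0..N} \<inter> {a<..} = {0..N}" by auto
        then show ?thesis using h[OF N] by simp
      next
        case False
        show ?thesis
        proof (cases "a \<le> N")
          case True
          have e: "{0..N} \<inter> {a<..} = {a<..N}" using False by auto
          have "(h has_integral 0) {a..N}" using sub_interval_zero[OF h _ True] False by simp
          moreover have "(h has_integral 0) {a..N} \<longleftrightarrow> (h has_integral 0) {a<..N}"
            by (rule has_integral_spike_set_eq) (auto intro: negligible_subset[of "{a}"])
          ultimately show ?thesis unfolding e by simp
        next
          case False
          then have "{0..N} \<inter> {a<..} = {}" by auto
          then show ?thesis by simp
        qed
      qed
      then have "(u has_integral 0) {a<..}"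
        unfolding u_def has_integral_restrict_Int .
      then show ?thesis by (rule integral_unique)
    qed
    finally show ?thesis .
  qed
  define P where "P x = max 0 (u' x)" for x
  define Q where "Q x = max 0 (- u' x)" for x
  have Pb: "P \<in> borel_measurable lborel" "Q \<in> borel_measurable lborel"
    unfolding P_def Q_def using u'b by (auto intro!: borel_measurable_max borel_measurable_uminus)
  have Pint: "integrable lborel P" "integrable lborel Q"
    unfolding P_def Q_def using u'int by (auto intro!: integrable_max integrable_minus)
  have em: "emeasure (density lborel (\<lambda>x. ennreal (P x))) {a<..} = emeasure (density lborel (\<lambda>x. ennreal (Q x))) {a<..}"
    and fin: "emeasure (density lborel (\<lambda>x. ennreal (P x))) {a<..} < \<infinity>" for a
  proof -
    have ePQ: "emeasure (density lborel (\<lambda>x. ennreal (R x))) {a<..} = ennreal (\<integral>x. indicator {a<..} x * R x \<partial>lborel)"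
      if R: "R \<in> borel_measurable lborel" "integrable lborel R" "\<And>x. R x \<ge> 0" for R
    proof -
      have "emeasure (density lborel (\<lambda>x. ennreal (R x))) {a<..} = (\<integral>\<^sup>+ x. ennreal (R x) * indicator {a<..} x \<partial>lborel)"
        by (rule emeasure_density) (use R in auto)
      also have "\<dots> = (\<integral>\<^sup>+ x. ennreal (indicator {a<..} x * R x) \<partial>lborel)"
        by (intro nn_integral_cong) (auto split: split_indicator)
      also have "\<dots> = ennreal (\<integral>x. indicator {a<..} x * R x \<partial>lborel)"
      proof (rule nn_integral_eq_integral)
        show "integrable lborel (\<lambda>x. indicator {a<..} x * R x)"
          using integrable_mult_indicator[of "{a<..}" lborel R] R by simp
      qed (use R in \<open>auto split: split_indicator\<close>)
      finally show ?thesis .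
    qed
    have P0: "\<And>x. P x \<ge> 0" "\<And>x. Q x \<ge> 0" by (auto simp: P_def Q_def)
    have "(\<integral>x. indicator {a<..} x * P x \<partial>lborel) - (\<integral>x. indicator {a<..} x * Q x \<partial>lborel)
        = (\<integral>x. indicator {a<..} x * u' x \<partial>lborel)"
    proof -
      have iP: "integrable lborel (\<lambda>x. indicator {a<..} x * P x)"
        using integrable_mult_indicator[of "{a<..}" lborel P] Pint by simp
      have iQ: "integrable lborel (\<lambda>x. indicator {a<..} x * Q x)"
        using integrable_mult_indicator[of "{a<..}" lborel Q] Pint by simp
      have "(\<integral>x. indicator {a<..} x * P x \<partial>lborel) - (\<integral>x. indicator {a<..} x * Q x \<partial>lborel)
          = (\<integral>x. indicator {a<..} x * P x - indicator {a<..} x * Q x \<partial>lborel)"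
        by (rule Bochner_Integration.integral_diff[symmetric]) (use iP iQ in auto)
      also have "\<dots> = (\<integral>x. indicator {a<..} x * u' x \<partial>lborel)"
        by (intro Bochner_Integration.integral_cong refl) (auto simp: P_def Q_def split: split_indicator)
      finally show ?thesis .
    qed
    then have eqI: "(\<integral>x. indicator {a<..} x * P x \<partial>lborel) = (\<integral>x. indicator {a<..} x * Q x \<partial>lborel)"
      using half[of a] by simp
    show "emeasure (density lborel (\<lambda>x. ennreal (P x))) {a<..} = emeasure (density lborel (\<lambda>x. ennreal (Q x))) {a<..}"
      using ePQ[OF Pb(1) Pint(1) P0(1)] ePQ[OF Pb(2) Pint(2) P0(2)] eqI by simp
    show "emeasure (density lborel (\<lambda>x. ennreal (P x))) {a<..} < \<infinity>"
      using ePQ[OF Pb(1) Pint(1) P0(1)] by simp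
  qed
  have "density lborel (\<lambda>x. ennreal (P x)) = density lborel (\<lambda>x. ennreal (Q x))"
    by (rule measure_eqI_lessThan) (use em fin in auto)
  then have "AE x in lborel. ennreal (P x) = ennreal (Q x)"
    by (intro sigma_finite_measure.density_unique[OF sigma_finite_lborel]) (use Pb in auto)
  then have "AE x in lborel. u' x = 0"
    by eventually_elim (auto simp: P_def Q_def max_def split: if_splits)
  with uu' have "AE x in lborel. u x = 0" by eventually_elim simp
  then obtain Z where Z0: "{x \<in> space lborel. \<not> u x = 0} \<subseteq> Z" "emeasure lborel Z = 0" "Z \<in> sets lborel"
    by (rule AE_E)
  have Z: "Z \<in> null_sets lborel" "{x. \<not> u x = 0} \<subseteq> Z"
    using Z0 by (auto intro: null_setsI)
  have "negligible Z" using Z(1) by (simp add: negligible_iff_null_sets null_sets_completionI)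
  moreover have "{x \<in> {0..N}. h x \<noteq> 0} \<subseteq> Z" using Z(2) by (auto simp: u_def)
  ultimately show ?thesis by (rule negligible_subset)
qed

lemma ae_zero:
  fixes h :: "real \<Rightarrow> real"
  assumes h: "\<And>x. 0 \<le> x \<Longrightarrow> (h has_integral 0) {0..x}"
  shows "negligible {x. 0 \<le> x \<and> h x \<noteq> 0}"
proof -
  have "negligible (\<Union>n::nat. {x \<in> {0..real n}. h x \<noteq> 0})"
  proof (rule negligible_Union_nat)
    fix n :: nat
    have "0 \<le> real n" by (rule of_nat_0_le_iff)
    then show "negligible {x \<in> {0..real n}. h x \<noteq> 0}" using ae_zero_on_N[OF h] by blast
  qed
  moreover have "{x. 0 \<le> x \<and> h x \<noteq> 0} \<subseteq> (\<Union>n::nat. {x \<in> {0..real n}. h x \<noteq> 0})"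
  proof
    fix x assume x: "x \<in> {x. 0 \<le> x \<and> h x \<noteq> 0}"
    obtain n :: nat where "x \<le> real n" using real_arch_simple by blast
    then show "x \<in> (\<Union>n::nat. {x \<in> {0..real n}. h x \<noteq> 0})" using x by auto
  qed
  ultimately show ?thesis by (rule negligible_subset)
qed

lemma gamma_base: "((\<lambda>x::real. x ^ k * exp (- x)) has_integral fact k) {0<..}"
proof -
  have "((\<lambda>t. t powr (real k + 1 - 1) / exp t) has_integral Gamma (real k + 1)) {0..}"
    by (rule Gamma_integral_real) simp
  moreover have "Gamma (real k + 1) = fact k"
    using Gamma_fact[of k] by (simp add: add.commute)
  ultimately have a: "((\<lambda>t. t powr (real k) / exp t) has_integral fact k) {0..}" by simp
  have b: "((\<lambda>t. t powr (real k) / exp t) has_integral fact k) {0<..}"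
  proof -
    have "((\<lambda>t. t powr (real k) / exp t) has_integral fact k) {0..} \<longleftrightarrow>
          ((\<lambda>t. t powr (real k) / exp t) has_integral fact k) {0<..}"
      by (rule has_integral_spike_set_eq) (auto intro: negligible_subset[of "{0}"])
    then show ?thesis using a by simp
  qed
  show ?thesis
    by (rule has_integral_eq[OF _ b]) (simp add: powr_realpow exp_minus field_simps)
qed

lemma Lam_has_integral: "((\<lambda>x. exp (- x) * poly p x) has_integral Lam p) {0<..}"
proof -
  have "((\<lambda>x. \<Sum>i\<le>degree p. coeff p i * (x ^ i * exp (- x))) has_integral (\<Sum>i\<le>degree p. coeff p i * fact i)) {0<..}"
    by (intro has_integral_sum finite_atMost has_integral_mult_right gamma_base)
  moreover have "(\<lambda>x. \<Sum>i\<le>degree p. coeff p i * (x ^ i * exp (- x))) = (\<lambda>x. exp (- x) * poly p x)"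
    by (auto simp: poly_altdef sum_distrib_left algebra_simps)
  ultimately show ?thesis by (simp add: Lam_def)
qed

lemma Lam_integral: "integral {0<..} (\<lambda>x. exp (- x) * poly p x) = Lam p"
  using Lam_has_integral by (rule integral_unique)

lemma ftc_poly:
  fixes p :: "real poly"
  assumes x: "0 \<le> x"
  shows "((\<lambda>t. exp (- t / 2) * poly (pderiv p - smult (1/2) p) t) has_integral
          (exp (- x / 2) * poly p x - poly p 0)) {0..x}"
proof -
  have "((\<lambda>t. exp (- t / 2) * poly (pderiv p - smult (1/2) p) t) has_integral
          (exp (- x / 2) * poly p x - exp (- 0 / 2) * poly p 0)) {0..x}"
  proof (rule fundamental_theorem_of_calculus[OF x])
    fix t assume "t \<in> {0..x}"
    have "((\<lambda>t. exp (- t / 2) * poly p t) has_real_derivative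
            (exp (- t / 2) * (- 1 / 2) * poly p t + exp (- t / 2) * poly (pderiv p) t)) (at t)"
      by (auto intro!: derivative_eq_intros poly_DERIV simp: field_simps)
    moreover have "exp (- t / 2) * (- 1 / 2) * poly p t + exp (- t / 2) * poly (pderiv p) t
        = exp (- t / 2) * poly (pderiv p - smult (1/2) p) t"
      by (simp add: algebra_simps)
    ultimately show "((\<lambda>t. exp (- t / 2) * poly p t) has_vector_derivative
            (exp (- t / 2) * poly (pderiv p - smult (1/2) p) t)) (at t within {0..x})"
      by (simp add: has_real_derivative_iff_has_vector_derivative[symmetric] has_field_derivative_at_within)
  qed
  then show ?thesis by simp
qed

lemma exp_half_sq: "(exp (- x / 2))\<^sup>2 = exp (- (x::real))"
proof -
  have "(exp (- x / 2))\<^sup>2 = exp (- x / 2) * exp (- x / 2)" by (rule power2_eq_square)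
  also have "\<dots> = exp (- x / 2 + - x / 2)" by (rule exp_add[symmetric])
  also have "- x / 2 + - x / 2 = - x" by simp
  finally show ?thesis .
qed

lemma sq_exp_poly: "(exp (- x / 2) * poly q x)\<^sup>2 = exp (- x) * poly (q * q) (x::real)"
proof -
  have "(exp (- x / 2) * poly q x)\<^sup>2 = (exp (- x / 2))\<^sup>2 * (poly q x)\<^sup>2" by (rule power_mult_distrib)
  also have "\<dots> = exp (- x) * poly (q * q) x" unfolding exp_half_sq by (simp add: power2_eq_square)
  finally show ?thesis .
qed

lemma Dop_X: "pderiv ([:0, 1:] * q) - smult (1/2) ([:0, 1:] * q) = Dop q"
  by (simp add: Dop_def pderiv_mult pderiv_pCons algebra_simps)

lemma core:
  fixes f :: "real \<Rightarrow> real" and q :: "real poly" and a :: "nat \<Rightarrow> real"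
  assumes fi: "\<And>x. 0 \<le> x \<Longrightarrow> (f has_integral (exp (- x / 2) * poly ([:0, 1:] * q) x)) {0..x}"
    and qa: "q = (\<Sum>k<n. smult (a k) (lag k))" and z: "\<And>k. n \<le> k \<Longrightarrow> a k = 0" and n: "n \<ge> 1"
  shows "integral {0<..} (\<lambda>x. ((1 / x) * integral {0..x} f)\<^sup>2) = (\<Sum>k<n. (a k)\<^sup>2)"
    and "integral {0<..} (\<lambda>x. (f x)\<^sup>2) = ((\<Sum>k<n. (a k)\<^sup>2) + (\<Sum>j\<le>n. (Kr a j)\<^sup>2)) / 4"
proof -
  have "integral {0<..} (\<lambda>x. ((1 / x) * integral {0..x} f)\<^sup>2) = integral {0<..} (\<lambda>x. exp (- x) * poly (q * q) x)"
  proof (rule integral_cong)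
    fix x :: real assume x: "x \<in> {0<..}"
    then have x0: "x > 0" by simp
    have "integral {0..x} f = exp (- x / 2) * poly ([:0, 1:] * q) x"
      using fi[of x] x0 by (simp add: integral_unique)
    also have "\<dots> = exp (- x / 2) * (x * poly q x)" by simp
    finally have "(1 / x) * integral {0..x} f = exp (- x / 2) * poly q x" using x0 by simp
    then show "((1 / x) * integral {0..x} f)\<^sup>2 = exp (- x) * poly (q * q) x"
      by (simp only: sq_exp_poly)
  qed
  also have "\<dots> = Lam (q * q)" by (rule Lam_integral)
  also have "\<dots> = (\<Sum>k<n. (a k)\<^sup>2)" unfolding qa by (rule norms(1)[OF z n])
  finally show "integral {0<..} (\<lambda>x. ((1 / x) * integral {0..x} f)\<^sup>2) = (\<Sum>k<n. (a k)\<^sup>2)" .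
  define p where "p = [:0, 1:] * q"
  define g where "g t = exp (- t / 2) * poly (Dop q) t" for t
  have gi: "(g has_integral (exp (- x / 2) * poly p x)) {0..x}" if x: "0 \<le> x" for x
    using ftc_poly[OF x, of p] unfolding g_def p_def Dop_X by (simp add: p_def)
  have hi: "((\<lambda>t. f t - g t) has_integral 0) {0..x}" if x: "0 \<le> x" for x
    using has_integral_diff[OF fi[OF x] gi[OF x]] by (simp add: p_def)
  have neg: "negligible {x. 0 \<le> x \<and> f x - g x \<noteq> 0}" by (rule ae_zero) (rule hi)
  have "integral {0<..} (\<lambda>x. (f x)\<^sup>2) = integral {0<..} (\<lambda>x. exp (- x) * poly (Dop q * Dop q) x)"
  proof (rule integral_spike[OF neg])
    fix x :: real assume "x \<in> {0<..} - {x. 0 \<le> x \<and> f x - g x \<noteq> 0}"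
    then have "f x = g x" by auto
    then show "exp (- x) * poly (Dop q * Dop q) x = (f x)\<^sup>2"
      unfolding g_def by (simp only: sq_exp_poly)
  qed
  also have "\<dots> = Lam (Dop q * Dop q)" by (rule Lam_integral)
  also have "\<dots> = ((\<Sum>k<n. (a k)\<^sup>2) + (\<Sum>j\<le>n. (Kr a j)\<^sup>2)) / 4" unfolding qa by (rule norms(2)[OF z n])
  finally show "integral {0<..} (\<lambda>x. (f x)\<^sup>2) = ((\<Sum>k<n. (a k)\<^sup>2) + (\<Sum>j\<le>n. (Kr a j)\<^sup>2)) / 4" .
qed

lemma rep:
  fixes f :: "real \<Rightarrow> real"
  assumes f: "f \<in> H n" and n: "n \<ge> 1"
  obtains a where "\<And>k. n \<le> k \<Longrightarrow> a k = 0"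
    and "integral {0<..} (\<lambda>x. ((1 / x) * integral {0..x} f)\<^sup>2) = (\<Sum>k<n. (a k)\<^sup>2)"
    and "integral {0<..} (\<lambda>x. (f x)\<^sup>2) = ((\<Sum>k<n. (a k)\<^sup>2) + (\<Sum>j\<le>n. (Kr a j)\<^sup>2)) / 4"
proof -
  from f obtain p :: "real poly" where p: "degree p \<le> n" "poly p 0 = 0"
    "\<And>x. 0 \<le> x \<Longrightarrow> (f has_integral (exp (- x / 2) * poly p x)) {0..x}"
    unfolding H_def by blast
  have "[:- 0, 1:] dvd p" using p(2) by (simp only: poly_eq_0_iff_dvd[symmetric])
  then obtain q where pq: "p = [:0, 1:] * q" by (auto elim: dvdE)
  have cq: "\<forall>i\<ge>n. coeff q i = 0"
  proof (cases "q = 0")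
    case True then show ?thesis by simp
  next
    case False
    have "degree p = Suc (degree q)" unfolding pq using False by simp
    then have "degree q < n" using p(1) by simp
    then show ?thesis by (auto intro: coeff_eq_0)
  qed
  obtain a where a: "\<forall>k\<ge>n. a k = 0" "q = (\<Sum>k<n. smult (a k) (lag k))"
    using lag_expansion_exists[OF cq] by blast
  have z: "\<And>k. n \<le> k \<Longrightarrow> a k = 0" using a(1) by blast
  have fi: "\<And>x. 0 \<le> x \<Longrightarrow> (f has_integral (exp (- x / 2) * poly ([:0, 1:] * q) x)) {0..x}"
    using p(3) unfolding pq .
  show ?thesis
    by (rule that[OF z core(1)[OF fi a(2) z n] core(2)[OF fi a(2) z n]])
qed

lemma con:
  fixes a :: "nat \<Rightarrow> real"
  assumes z: "\<And>k. n \<le> k \<Longrightarrow> a k = 0" and n: "n \<ge> 1"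
  defines "f \<equiv> (\<lambda>x. exp (- x / 2) * poly (Dop (\<Sum>k<n. smult (a k) (lag k))) x)"
  shows "f \<in> H n"
    and "integral {0<..} (\<lambda>x. ((1 / x) * integral {0..x} f)\<^sup>2) = (\<Sum>k<n. (a k)\<^sup>2)"
    and "integral {0<..} (\<lambda>x. (f x)\<^sup>2) = ((\<Sum>k<n. (a k)\<^sup>2) + (\<Sum>j\<le>n. (Kr a j)\<^sup>2)) / 4"
proof -
  define q where "q = (\<Sum>k<n. smult (a k) (lag k))"
  define p where "p = [:0, 1:] * q"
  have dq: "degree q \<le> n - 1" unfolding q_def
  proof (rule degree_sum_le)
    fix k assume "k \<in> {..<n}"
    then have "degree (lag k) \<le> n - 1" by (simp add: degree_lag)
    then show "degree (smult (a k) (lag k)) \<le> n - 1" using degree_smult_le order_trans by blast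
  qed simp
  have dp: "degree p \<le> n"
  proof -
    have "degree p \<le> degree [:0, 1::real:] + degree q" unfolding p_def by (rule degree_mult_le)
    then show ?thesis using dq n by simp
  qed
  have p0: "poly p 0 = 0" by (simp add: p_def)
  have fi: "(f has_integral (exp (- x / 2) * poly ([:0, 1:] * q) x)) {0..x}" if x: "0 \<le> x" for x
    using ftc_poly[OF x, of p] p0 unfolding f_def q_def[symmetric] p_def Dop_X by simp
  have fi': "\<forall>x\<ge>0. (f has_integral (exp (- x / 2) * poly p x)) {0..x}"
    using fi unfolding p_def by blast
  show "f \<in> H n" unfolding H_def using dp p0 fi' by blast
  show "integral {0<..} (\<lambda>x. ((1 / x) * integral {0..x} f)\<^sup>2) = (\<Sum>k<n. (a k)\<^sup>2)"
    by (rule core(1)[OF fi q_def z n])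
  show "integral {0<..} (\<lambda>x. (f x)\<^sup>2) = ((\<Sum>k<n. (a k)\<^sup>2) + (\<Sum>j\<le>n. (Kr a j)\<^sup>2)) / 4"
    by (rule core(2)[OF fi q_def z n])
qed

theorem theorem1p2:
  fixes n :: nat
  assumes "n \<ge> 1"
  shows "4 * (1 - 2 / (ln ((real n + 1) / 2) + 2)) \<le> hardy_const n
       \<and> hardy_const n \<le> 4 * (1 - 8 / (ln ((real n + 1) / 2) + 4)\<^sup>2)"
proof -
  have n: "n \<ge> 1" by fact
  define L where "L = ln ((real n + 1) / 2)"
  have L0: "L \<ge> 0" using n by (simp add: L_def)
  define S where "S = {C. \<forall>f\<in>H n. integral {0<..} (\<lambda>x. ((1 / x) * integral {0..x} f)\<^sup>2)
        \<le> C * integral {0<..} (\<lambda>x. (f x)\<^sup>2)}"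
  have hc: "hardy_const n = Inf S" by (simp add: hardy_const_def S_def)
  define B where "B = L\<^sup>2 / 8 + L + 1"
  have B0: "B \<ge> 0" using L0 by (simp add: B_def)
  define C0 where "C0 = 4 * (1 - 8 / (L + 4)\<^sup>2)"
  have C0S: "C0 \<in> S"
    unfolding S_def
  proof (intro CollectI ballI)
    fix f assume f: "f \<in> H n"
    obtain a where z: "\<And>k. n \<le> k \<Longrightarrow> a k = 0"
      and e1: "integral {0<..} (\<lambda>x. ((1 / x) * integral {0..x} f)\<^sup>2) = (\<Sum>k<n. (a k)\<^sup>2)"
      and e2: "integral {0<..} (\<lambda>x. (f x)\<^sup>2) = ((\<Sum>k<n. (a k)\<^sup>2) + (\<Sum>j\<le>n. (Kr a j)\<^sup>2)) / 4"
      using rep[OF f n] by blast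
    define A where "A = (\<Sum>k<n. (a k)\<^sup>2)"
    define R where "R = (\<Sum>j\<le>n. (Kr a j)\<^sup>2)"
    have AR: "A \<le> B * R" unfolding A_def R_def B_def L_def by (rule disc_upper[OF n z])
    have R0: "R \<ge> 0" unfolding R_def by (intro sum_nonneg) auto
    have sq: "(L + 4)\<^sup>2 = 8 * (B + 1)" by (simp add: B_def power2_eq_square algebra_simps)
    have "C0 * ((A + R) / 4) = (A + R) - (A + R) / (B + 1)"
      unfolding C0_def sq using B0 by (simp add: field_simps)
    moreover have "(A + R) / (B + 1) \<le> R"
    proof -
      have "A + R \<le> R * (B + 1)" using AR by (simp add: algebra_simps)
      then show ?thesis using B0 by (simp add: divide_le_eq)
    qed
    ultimately have "A \<le> C0 * ((A + R) / 4)" by linarith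
    then show "integral {0<..} (\<lambda>x. ((1 / x) * integral {0..x} f)\<^sup>2) \<le> C0 * integral {0<..} (\<lambda>x. (f x)\<^sup>2)"
      unfolding e1 e2 A_def R_def .
  qed
  have pos: "C > 0" if C: "C \<in> S" for C
  proof -
    define a0 :: "nat \<Rightarrow> real" where "a0 k = (if k = 0 then 1 else 0)" for k
    have z0: "\<And>k. n \<le> k \<Longrightarrow> a0 k = 0" using n by (auto simp: a0_def)
    define f0 where "f0 = (\<lambda>x. exp (- x / 2) * poly (Dop (\<Sum>k<n. smult (a0 k) (lag k))) x)"
    have f0H: "f0 \<in> H n" unfolding f0_def by (rule con(1)[OF z0 n])
    have i1: "integral {0<..} (\<lambda>x. ((1 / x) * integral {0..x} f0)\<^sup>2) = (\<Sum>k<n. (a0 k)\<^sup>2)"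
      unfolding f0_def by (rule con(2)[OF z0 n])
    have i2: "integral {0<..} (\<lambda>x. (f0 x)\<^sup>2) = ((\<Sum>k<n. (a0 k)\<^sup>2) + (\<Sum>j\<le>n. (Kr a0 j)\<^sup>2)) / 4"
      unfolding f0_def by (rule con(3)[OF z0 n])
    have s1: "(\<Sum>k<n. (a0 k)\<^sup>2) = 1"
    proof -
      have "(\<Sum>k<n. (a0 k)\<^sup>2) = (\<Sum>k<n. if k = 0 then 1 else 0)"
        by (intro sum.cong) (auto simp: a0_def)
      also have "\<dots> = 1" using n by (simp add: sum.delta)
      finally show ?thesis .
    qed
    have R0: "(\<Sum>j\<le>n. (Kr a0 j)\<^sup>2) \<ge> 0" by (intro sum_nonneg) auto
    from C f0H have "integral {0<..} (\<lambda>x. ((1 / x) * integral {0..x} f0)\<^sup>2) \<le> C * integral {0<..} (\<lambda>x. (f0 x)\<^sup>2)"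
      unfolding S_def by blast
    then have "1 \<le> C * ((1 + (\<Sum>j\<le>n. (Kr a0 j)\<^sup>2)) / 4)"
      unfolding i1 i2 s1 .
    moreover have X: "(1 + (\<Sum>j\<le>n. (Kr a0 j)\<^sup>2)) / 4 > 0" using R0 by simp
    ultimately show "C > 0"
    proof -
      assume h1: "1 \<le> C * ((1 + (\<Sum>j\<le>n. (Kr a0 j)\<^sup>2)) / 4)"
        and h2: "(1 + (\<Sum>j\<le>n. (Kr a0 j)\<^sup>2)) / 4 > 0"
      show "C > 0"
      proof (rule ccontr)
        assume "\<not> C > 0"
        then have "C * ((1 + (\<Sum>j\<le>n. (Kr a0 j)\<^sup>2)) / 4) \<le> 0"
          using h2 by (intro mult_nonpos_nonneg) auto
        then show False using h1 by linarith
      qed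
    qed
  qed
  have bdd: "bdd_below S" by (rule bdd_belowI[of _ 0]) (use pos in fastforce)
  have Sne: "S \<noteq> {}" using C0S by blast
  have upper: "hardy_const n \<le> C0" unfolding hc by (rule cInf_lower[OF C0S bdd])
  have lower: "4 * (1 - 2 / (L + 2)) \<le> hardy_const n"
  proof (cases "n = 1")
    case True
    then have "L = 0" by (simp add: L_def)
    then have "4 * (1 - 2 / (L + 2)) = 0" by simp
    also have "0 \<le> hardy_const n" unfolding hc
      by (rule cInf_greatest[OF Sne]) (use pos in fastforce)
    finally show ?thesis .
  next
    case False
    then have n2: "n \<ge> 2" using n by simp
    define M where "M = (n + 1) div 2"
    define a where "a = tv M"
    have dl: "(\<forall>i. n \<le> i \<longrightarrow> a i = 0) \<and> (\<Sum>i<n. (a i)\<^sup>2) > 0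
         \<and> ln ((real n + 1) / 2) * (\<Sum>j\<le>n. (Kr a j)\<^sup>2) \<le> 2 * (\<Sum>i<n. (a i)\<^sup>2)"
      unfolding a_def M_def by (rule disc_lower[OF n2])
    have z: "\<And>k. n \<le> k \<Longrightarrow> a k = 0" using dl by blast
    define A where "A = (\<Sum>k<n. (a k)\<^sup>2)"
    define R where "R = (\<Sum>j\<le>n. (Kr a j)\<^sup>2)"
    have A0: "A > 0" using dl by (simp add: A_def)
    have LR: "L * R \<le> 2 * A" using dl by (simp add: A_def R_def L_def)
    define f where "f = (\<lambda>x. exp (- x / 2) * poly (Dop (\<Sum>k<n. smult (a k) (lag k))) x)"
    have fH: "f \<in> H n" unfolding f_def by (rule con(1)[OF z n])
    have i1: "integral {0<..} (\<lambda>x. ((1 / x) * integral {0..x} f)\<^sup>2) = A"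
      unfolding f_def A_def by (rule con(2)[OF z n])
    have i2: "integral {0<..} (\<lambda>x. (f x)\<^sup>2) = (A + R) / 4"
      unfolding f_def A_def R_def by (rule con(3)[OF z n])
    have bound: "4 * (1 - 2 / (L + 2)) \<le> C" if C: "C \<in> S" for C
    proof -
      have Cp: "C > 0" using pos[OF C] .
      from C fH have "integral {0<..} (\<lambda>x. ((1 / x) * integral {0..x} f)\<^sup>2) \<le> C * integral {0<..} (\<lambda>x. (f x)\<^sup>2)"
        unfolding S_def by blast
      then have "A \<le> C * ((A + R) / 4)" unfolding i1 i2 .
      then have h1: "4 * A \<le> C * (A + R)" by (simp add: field_simps)
      have "4 * L * A \<le> C * L * (A + R)"
        using mult_left_mono[OF h1 L0] by (simp add: algebra_simps)
      also have "\<dots> = C * (L * A + L * R)" by (simp add: algebra_simps)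
      also have "\<dots> \<le> C * (L * A + 2 * A)"
        using LR Cp by (intro mult_left_mono) auto
      finally have "4 * L * A \<le> C * (L + 2) * A" by (simp add: algebra_simps)
      then have h2: "4 * L \<le> C * (L + 2)" using A0 by simp
      have "4 * (1 - 2 / (L + 2)) = 4 * L / (L + 2)" using L0 by (simp add: field_simps)
      also have "\<dots> \<le> C" using h2 L0 by (simp add: divide_le_eq)
      finally show ?thesis .
    qed
    show ?thesis unfolding hc by (rule cInf_greatest[OF Sne]) (rule bound)
  qed
  show ?thesis using upper lower unfolding C0_def L_def by simp
qed

end
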